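(* Let $\beta>0$, $x=\tanh\beta$, and let $M_n=\sum_{i=1}^n\sigma(i)$ under the Ising measure $\mathbb{I}_{0,\beta}$. For every $r\ge1$ and $n\ge1$, $$\frac{|\kappa^{(2r)}(M_n)|}{n}\le\sum_{c\in\mathfrak{C}_{2r}}\ \sum_{\delta\in\mathfrak{D}^*_{2r}}A(c)\,B(c,\delta)\,C(\delta),$$ where $A(c)=\frac{(2r)!}{c_1!\cdots c_\ell!}$, $B(c,\delta)=\prod_{d\in D(c)}\frac{x^{\delta_d}}{1-x^{\delta_d}}$ and $C(\delta)=\prod_{k=1}^{2r-1}\delta_k$.
   Context: The Ising measure $\mathbb{I}_{0,\beta}$ gives to $\sigma:\{1,\dots,n\}\to\{\pm1\}$ probability proportional to $\exp(\beta\sum_{i=1}^{n-1}\sigma(i)\sigma(i+1))$. $\kappa^{(s)}(X)$ is the $s$-th cumulant, i.e. $\log\mathbb{E}[e^{zX}]=\sum_{s\ge1}\kappa^{(s)}(X)z^s/s!$. $\mathfrak{C}_{2r}$ is the set of compositions $c=(c_1,\dots,c_\ell)$ of $2r$ (positive integers summing to $2r$), and $D(c)=\{c_1,c_1+c_2,\dots,c_1+\dots+c_{\ell-1}\}$ its descent set. A Dyck path of length $2r$ is a sequence $(\delta_0,\dots,\delta_{2r})$ of nonnegative integers with $\delta_0=\delta_{2r}=0$ and $|\delta_{k+1}-\delta_k|=1$; $\mathfrak{D}^*_{2r}$ is the set of those with $\delta_k\ge1$ for $1\le k\le 2r-1$. *)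

theory Defs
  imports "HOL-Analysis.Analysis" "HOL-Library.FuncSet"
begin

definition configs :: "nat \<Rightarrow> (nat \<Rightarrow> real) set" where
  "configs n = PiE {1..n} (\<lambda>_. {-1, 1})"

definition ising_weight :: "nat \<Rightarrow> real \<Rightarrow> (nat \<Rightarrow> real) \<Rightarrow> real" where
  "ising_weight n \<beta> \<sigma> = exp (\<beta> * (\<Sum>i\<in>{1..<n}. \<sigma> i * \<sigma> (i+1)))"

definition partition_fn :: "nat \<Rightarrow> real \<Rightarrow> real" where
  "partition_fn n \<beta> = (\<Sum>\<sigma>\<in>configs n. ising_weight n \<beta> \<sigma>)"

definition ising_expect :: "nat \<Rightarrow> real \<Rightarrow> ((nat \<Rightarrow> real) \<Rightarrow> real) \<Rightarrow> real" where
  "ising_expect n \<beta> f = (\<Sum>\<sigma>\<in>configs n. ising_weight n \<beta> \<sigma> * f \<sigma>) / partition_fn n \<beta>"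

definition magnetization :: "nat \<Rightarrow> (nat \<Rightarrow> real) \<Rightarrow> real" where
  "magnetization n \<sigma> = (\<Sum>i=1..n. \<sigma> i)"

definition cumulant_M :: "nat \<Rightarrow> real \<Rightarrow> nat \<Rightarrow> real" where
  "cumulant_M n \<beta> s =
     (deriv ^^ s) (\<lambda>z. ln (ising_expect n \<beta> (\<lambda>\<sigma>. exp (z * magnetization n \<sigma>)))) 0"

definition compositions :: "nat \<Rightarrow> nat list set" where
  "compositions m = {c. (\<forall>i\<in>set c. 0 < i) \<and> sum_list c = m}"

definition descent_set :: "nat list \<Rightarrow> nat set" where
  "descent_set c = {sum_list (take j c) | j. 1 \<le> j \<and> j < length c}"

definition dyck_star :: "nat \<Rightarrow> nat list set" where
  "dyck_star m = {\<delta>. length \<delta> = m + 1 \<and> \<delta> ! 0 = 0 \<and> \<delta> ! m = 0 \<and>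
      (\<forall>k<m. \<delta> ! (k+1) = \<delta> ! k + 1 \<or> \<delta> ! k = \<delta> ! (k+1) + 1) \<and>
      (\<forall>k. 1 \<le> k \<and> k \<le> m - 1 \<longrightarrow> 1 \<le> \<delta> ! k)}"

definition coefA :: "nat \<Rightarrow> nat list \<Rightarrow> real" where
  "coefA r c = fact (2*r) / (\<Prod>i<length c. fact (c ! i))"

definition coefB :: "real \<Rightarrow> nat list \<Rightarrow> nat list \<Rightarrow> real" where
  "coefB x c \<delta> = (\<Prod>d\<in>descent_set c. x ^ (\<delta> ! d) / (1 - x ^ (\<delta> ! d)))"

definition coefC :: "nat \<Rightarrow> nat list \<Rightarrow> real" where
  "coefC r \<delta> = (\<Prod>k=1..2*r-1. real (\<delta> ! k))"

end

theory Submission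
  imports Defs "HOL-Computational_Algebra.Polynomial"
begin


definition Aop :: "real \<Rightarrow> (nat \<Rightarrow> real) \<Rightarrow> nat \<Rightarrow> real" where
  "Aop c g h = (c - real h) * g (Suc h) + real h * g (h - 1)"

definition Sop :: "real \<Rightarrow> (nat \<Rightarrow> real fps) \<Rightarrow> nat \<Rightarrow> real fps" where
  "Sop c f h = Abs_fps (\<lambda>u. \<Sum>j\<le>u. (Aop c ^^ j) (\<lambda>h'. fps_nth (f h') (u - j)) h / fact j)"

definition Dop :: "real \<Rightarrow> (nat \<Rightarrow> real fps) \<Rightarrow> nat \<Rightarrow> real fps" where
  "Dop x f h = fps_const (x ^ h) * f h"

fun Vch :: "real \<Rightarrow> real \<Rightarrow> nat \<Rightarrow> nat \<Rightarrow> real fps" where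
  "Vch c x 0 = (\<lambda>h. if h = 0 then 1 else 0)"
| "Vch c x (Suc k) = Sop c (if k = 0 then Vch c x k else Dop x (Vch c x k))"

fun pw :: "nat \<Rightarrow> nat \<Rightarrow> nat list list" where
  "pw h 0 = [[h]]"
| "pw h (Suc j) = map (Cons h) (pw (Suc h) j) @ (if h > 0 then map (Cons h) (pw (h - 1) j) else [])"

definition stepw :: "real \<Rightarrow> nat \<Rightarrow> nat \<Rightarrow> real" where
  "stepw c h h' = (if h' = Suc h then c - real h else real h)"

fun wt :: "real \<Rightarrow> nat list \<Rightarrow> real" where
  "wt c [] = 1"
| "wt c [h] = 1"
| "wt c (h # h' # t) = stepw c h h' * wt c (h' # t)"

fun Gf :: "real \<Rightarrow> nat \<Rightarrow> nat list \<Rightarrow> real" where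
  "Gf x 0 p = (if p = [0] then 1 else 0)"
| "Gf x (Suc k) p = (\<Sum>j<length p. (if k = 0 then 1 else x ^ (p ! j)) * Gf x k (drop j p) / fact j)"

lemma pw_props: "p \<in> set (pw h j) \<Longrightarrow> p \<noteq> [] \<and> hd p = h \<and> length p = Suc j"
  by (induction j arbitrary: h p) (auto split: if_splits)

lemma wt_Cons: "p \<noteq> [] \<Longrightarrow> wt c (h # p) = stepw c h (hd p) * wt c p"
  by (cases p) auto

lemma sum_list_cmult: "(\<Sum>x\<leftarrow>xs. k * f x) = (k::real) * (\<Sum>x\<leftarrow>xs. f x)"
  by (induction xs) (auto simp: algebra_simps)

lemma sum_list_map_cong: "(\<And>x. x \<in> set xs \<Longrightarrow> f x = g x) \<Longrightarrow> (\<Sum>x\<leftarrow>xs. f x) = (\<Sum>x\<leftarrow>xs. g x)"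
  by (metis map_cong)

lemma A_exp: "(Aop c ^^ j) g h = (\<Sum>p\<leftarrow>pw h j. wt c p * g (last p))"
proof (induction j arbitrary: h)
  case 0
  then show ?case by simp
next
  case (Suc j)
  have e1: "(\<Sum>p\<leftarrow>map (Cons h) (pw (Suc h) j). wt c p * g (last p))
      = (c - real h) * (Aop c ^^ j) g (Suc h)"
  proof -
    have "(\<Sum>p\<leftarrow>map (Cons h) (pw (Suc h) j). wt c p * g (last p))
        = (\<Sum>p\<leftarrow>pw (Suc h) j. (c - real h) * (wt c p * g (last p)))"
      by (simp add: o_def, rule sum_list_map_cong)
         (auto dest!: pw_props simp: wt_Cons stepw_def)
    then show ?thesis by (simp add: sum_list_cmult Suc.IH)
  qed
  have e2: "h > 0 \<Longrightarrow> (\<Sum>p\<leftarrow>map (Cons h) (pw (h - 1) j). wt c p * g (last p))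
      = real h * (Aop c ^^ j) g (h - 1)"
  proof -
    assume "h > 0"
    have "(\<Sum>p\<leftarrow>map (Cons h) (pw (h - 1) j). wt c p * g (last p))
        = (\<Sum>p\<leftarrow>pw (h - 1) j. real h * (wt c p * g (last p)))"
      using \<open>h > 0\<close> by (simp add: o_def, intro sum_list_map_cong)
         (auto dest!: pw_props simp: wt_Cons stepw_def)
    then show ?thesis by (simp add: sum_list_cmult Suc.IH)
  qed
  have "(Aop c ^^ Suc j) g h = (c - real h) * (Aop c ^^ j) g (Suc h) + real h * (Aop c ^^ j) g (h - 1)"
    by (simp only: funpow.simps o_apply Aop_def)
  then show ?case
    using e1 e2 by (cases "h = 0") auto
qed

lemma wt_up: "p \<in> set (pw (Suc h) k) \<Longrightarrow> wt c (h # p) = (c - real h) * wt c p"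
  by (auto dest!: pw_props simp: wt_Cons stepw_def)

lemma wt_down: "h > 0 \<Longrightarrow> p \<in> set (pw (h - 1) k) \<Longrightarrow> wt c (h # p) = real h * wt c p"
  by (auto dest!: pw_props simp: wt_Cons stepw_def)

lemma last_pw: "p \<in> set (pw h k) \<Longrightarrow> last (h' # p) = last p"
  by (auto dest!: pw_props)

lemma concat_pw:
  "(\<Sum>s\<leftarrow>pw h j. wt c s * (\<Sum>r\<leftarrow>pw (last s) m. wt c r * X r))
   = (\<Sum>p\<leftarrow>pw h (j + m). wt c p * X (drop j p))"
proof (induction j arbitrary: h)
  case 0
  then show ?case by simp
next
  case (Suc j)
  have a1: "(\<Sum>s\<leftarrow>map (Cons h) (pw (Suc h) j). wt c s * (\<Sum>r\<leftarrow>pw (last s) m. wt c r * X r))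
     = (c - real h) * (\<Sum>p\<leftarrow>pw (Suc h) (j + m). wt c p * X (drop j p))"
  proof -
    have "(\<Sum>s\<leftarrow>map (Cons h) (pw (Suc h) j). wt c s * (\<Sum>r\<leftarrow>pw (last s) m. wt c r * X r))
      = (\<Sum>s\<leftarrow>pw (Suc h) j. (c - real h) * (wt c s * (\<Sum>r\<leftarrow>pw (last s) m. wt c r * X r)))"
      by (simp add: o_def, intro sum_list_map_cong) (frule pw_props, simp add: wt_up)
    then show ?thesis by (simp add: sum_list_cmult Suc.IH)
  qed
  have a2: "(\<Sum>p\<leftarrow>map (Cons h) (pw (Suc h) (j + m)). wt c p * X (drop (Suc j) p))
     = (c - real h) * (\<Sum>p\<leftarrow>pw (Suc h) (j + m). wt c p * X (drop j p))"
  proof -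
    have "(\<Sum>p\<leftarrow>map (Cons h) (pw (Suc h) (j + m)). wt c p * X (drop (Suc j) p))
      = (\<Sum>p\<leftarrow>pw (Suc h) (j + m). (c - real h) * (wt c p * X (drop j p)))"
      by (simp add: o_def, intro sum_list_map_cong) (simp add: wt_up)
    then show ?thesis by (simp add: sum_list_cmult)
  qed
  have b1: "h > 0 \<Longrightarrow> (\<Sum>s\<leftarrow>map (Cons h) (pw (h - 1) j). wt c s * (\<Sum>r\<leftarrow>pw (last s) m. wt c r * X r))
     = real h * (\<Sum>p\<leftarrow>pw (h - 1) (j + m). wt c p * X (drop j p))"
  proof -
    assume h: "h > 0"
    have "(\<Sum>s\<leftarrow>map (Cons h) (pw (h - 1) j). wt c s * (\<Sum>r\<leftarrow>pw (last s) m. wt c r * X r))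
      = (\<Sum>s\<leftarrow>pw (h - 1) j. real h * (wt c s * (\<Sum>r\<leftarrow>pw (last s) m. wt c r * X r)))"
      using h by (simp add: o_def, intro sum_list_map_cong) (frule pw_props, simp add: wt_down)
    then show ?thesis by (simp add: sum_list_cmult Suc.IH)
  qed
  have b2: "h > 0 \<Longrightarrow> (\<Sum>p\<leftarrow>map (Cons h) (pw (h - 1) (j + m)). wt c p * X (drop (Suc j) p))
     = real h * (\<Sum>p\<leftarrow>pw (h - 1) (j + m). wt c p * X (drop j p))"
  proof -
    assume h: "h > 0"
    have "(\<Sum>p\<leftarrow>map (Cons h) (pw (h - 1) (j + m)). wt c p * X (drop (Suc j) p))
      = (\<Sum>p\<leftarrow>pw (h - 1) (j + m). real h * (wt c p * X (drop j p)))"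
      using h by (simp add: o_def, intro sum_list_map_cong) (simp add: wt_down)
    then show ?thesis by (simp add: sum_list_cmult)
  qed
  have eq: "pw h (Suc j + m) = map (Cons h) (pw (Suc h) (j + m)) @ (if h > 0 then map (Cons h) (pw (h - 1) (j + m)) else [])"
    by simp
  show ?case
    unfolding eq pw.simps(2) sum_list_append map_append
    using a1 a2 b1 b2 by (cases "h = 0") auto
qed

lemma sum_sum_list_swap: "(\<Sum>j\<in>A. \<Sum>p\<leftarrow>xs. f j p) = (\<Sum>p\<leftarrow>xs. \<Sum>j\<in>A. (f j p :: real))"
  by (induction xs) (auto simp: sum.distrib)

lemma sum_list_divide: "(\<Sum>x\<leftarrow>xs. f x) / (k::real) = (\<Sum>x\<leftarrow>xs. f x / k)"
  by (induction xs) (auto simp: add_divide_distrib)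

lemma V_nth: "fps_nth ((if k = 0 then Vch c x k else Dop x (Vch c x k)) h) t
   = (if k = 0 then 1 else x ^ h) * fps_nth (Vch c x k h) t"
  by (simp add: Dop_def)

lemma V_exp: "fps_nth (Vch c x k h) u = (\<Sum>p\<leftarrow>pw h u. wt c p * Gf x k p)"
proof (induction k arbitrary: h u)
  case 0
  show ?case
  proof (cases u)
    case 0
    then show ?thesis by simp
  next
    case (Suc u')
    have "(\<Sum>p\<leftarrow>pw h u. wt c p * Gf x 0 p) = (\<Sum>p\<leftarrow>pw h u. 0)"
      by (intro sum_list_map_cong) (auto dest!: pw_props simp: Suc)
    then show ?thesis using Suc by simp
  qed
next
  case (Suc k)
  define wk where "wk = (\<lambda>h. if k = 0 then 1 else x ^ h)"
  have step: "(Aop c ^^ j) (\<lambda>h'. fps_nth ((if k = 0 then Vch c x k else Dop x (Vch c x k)) h') (u - j)) h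
     = (\<Sum>p\<leftarrow>pw h u. wt c p * (wk (p ! j) * Gf x k (drop j p)))" if "j \<le> u" for j
  proof -
    have "(Aop c ^^ j) (\<lambda>h'. fps_nth ((if k = 0 then Vch c x k else Dop x (Vch c x k)) h') (u - j)) h
       = (\<Sum>s\<leftarrow>pw h j. wt c s * (wk (last s) * (\<Sum>r\<leftarrow>pw (last s) (u - j). wt c r * Gf x k r)))"
      by (simp add: A_exp V_nth Suc.IH wk_def)
    also have "\<dots> = (\<Sum>s\<leftarrow>pw h j. wt c s * (\<Sum>r\<leftarrow>pw (last s) (u - j). wt c r * (wk (hd r) * Gf x k r)))"
    proof (intro sum_list_map_cong arg_cong2[where f="(*)"] refl)
      fix s assume "s \<in> set (pw h j)"
      have "(\<Sum>r\<leftarrow>pw (last s) (u - j). wt c r * (wk (hd r) * Gf x k r))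
          = (\<Sum>r\<leftarrow>pw (last s) (u - j). wk (last s) * (wt c r * Gf x k r))"
        by (intro sum_list_map_cong) (auto dest!: pw_props)
      then show "wk (last s) * (\<Sum>r\<leftarrow>pw (last s) (u - j). wt c r * Gf x k r)
          = (\<Sum>r\<leftarrow>pw (last s) (u - j). wt c r * (wk (hd r) * Gf x k r))"
        by (simp add: sum_list_cmult)
    qed
    also have "\<dots> = (\<Sum>p\<leftarrow>pw h (j + (u - j)). wt c p * (wk (hd (drop j p)) * Gf x k (drop j p)))"
      by (rule concat_pw)
    also have "\<dots> = (\<Sum>p\<leftarrow>pw h u. wt c p * (wk (p ! j) * Gf x k (drop j p)))"
      using that by (simp, intro sum_list_map_cong) (auto dest!: pw_props simp: hd_drop_conv_nth)
    finally show ?thesis .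
  qed
  have "fps_nth (Vch c x (Suc k) h) u
     = (\<Sum>j\<le>u. (\<Sum>p\<leftarrow>pw h u. wt c p * (wk (p ! j) * Gf x k (drop j p))) / fact j)"
    by (simp add: Sop_def step)
  also have "\<dots> = (\<Sum>p\<leftarrow>pw h u. \<Sum>j\<le>u. wt c p * (wk (p ! j) * Gf x k (drop j p)) / fact j)"
    by (simp add: sum_list_divide sum_sum_list_swap)
  also have "\<dots> = (\<Sum>p\<leftarrow>pw h u. wt c p * Gf x (Suc k) p)"
  proof (intro sum_list_map_cong)
    fix p assume "p \<in> set (pw h u)"
    then have l: "length p = Suc u" by (auto dest!: pw_props)
    have "{..<length p} = {..u}" using l by auto
    then show "(\<Sum>j\<le>u. wt c p * (wk (p ! j) * Gf x k (drop j p)) / fact j) = wt c p * Gf x (Suc k) p"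
      by (simp add: sum_distrib_left wk_def)
  qed
  finally show ?case .
qed


lemma Aop_cmult: "Aop d (\<lambda>b. k * f b) b = k * Aop d f b"
  by (simp add: Aop_def algebra_simps)

lemma one_step:
  assumes g: "\<And>a b. g (a + b) = (\<Sum>q\<in>Q. U q a * W q b)"
  shows "Aop (c + d) g (a + b) = (\<Sum>q\<in>Q. Aop c (U q) a * W q b + U q a * Aop d (W q) b)"
proof -
  have h1: "(c - real a) * g (Suc (a + b)) = (\<Sum>q\<in>Q. (c - real a) * U q (Suc a) * W q b)"
    using g[of "Suc a" b] by (simp add: sum_distrib_left mult.assoc)
  have h2: "(d - real b) * g (Suc (a + b)) = (\<Sum>q\<in>Q. U q a * ((d - real b) * W q (Suc b)))"
    using g[of a "Suc b"] by (simp add: sum_distrib_left algebra_simps)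
  have h3: "real a * g (a + b - 1) = (\<Sum>q\<in>Q. real a * U q (a - 1) * W q b)"
  proof (cases a)
    case 0 then show ?thesis by simp
  next
    case (Suc a') then show ?thesis using g[of a' b] by (simp add: sum_distrib_left mult.assoc)
  qed
  have h4: "real b * g (a + b - 1) = (\<Sum>q\<in>Q. U q a * (real b * W q (b - 1)))"
  proof (cases b)
    case 0 then show ?thesis by simp
  next
    case (Suc b') then show ?thesis using g[of a b'] by (simp add: sum_distrib_left algebra_simps)
  qed
  have "Aop (c + d) g (a + b) = (c - real a) * g (Suc (a + b)) + (d - real b) * g (Suc (a + b))
      + real a * g (a + b - 1) + real b * g (a + b - 1)"
    by (simp add: Aop_def algebra_simps)
  also have "\<dots> = (\<Sum>q\<in>Q. Aop c (U q) a * W q b + U q a * Aop d (W q) b)"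
    unfolding h1 h2 h3 h4 by (simp add: Aop_def sum.distrib[symmetric] algebra_simps)
  finally show ?thesis .
qed

lemma pascal_sum:
  fixes X :: "nat \<Rightarrow> nat \<Rightarrow> real"
  shows "(\<Sum>i\<le>j. real (j choose i) * (X (Suc i) (j - i) + X i (Suc j - i)))
       = (\<Sum>i\<le>Suc j. real (Suc j choose i) * X i (Suc j - i))"
proof -
  have r: "(\<Sum>i\<le>Suc j. real (Suc j choose i) * X i (Suc j - i))
     = X 0 (Suc j) + (\<Sum>i\<le>j. real (j choose i) * X (Suc i) (j - i))
        + (\<Sum>i\<le>j. real (j choose Suc i) * X (Suc i) (j - i))"
    by (subst sum.atMost_Suc_shift) (simp add: sum.distrib algebra_simps)
  have l2: "(\<Sum>i\<le>j. real (j choose i) * X i (Suc j - i))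
     = X 0 (Suc j) + (\<Sum>i\<le>j. real (j choose Suc i) * X (Suc i) (j - i))"
  proof (cases j)
    case 0 then show ?thesis by simp
  next
    case (Suc j')
    have "(\<Sum>i\<le>j. real (j choose i) * X i (Suc j - i))
      = X 0 (Suc j) + (\<Sum>i\<le>j'. real (j choose Suc i) * X (Suc i) (j - i))"
      unfolding Suc by (subst sum.atMost_Suc_shift) simp
    also have "(\<Sum>i\<le>j. real (j choose Suc i) * X (Suc i) (j - i))
       = (\<Sum>i\<le>j'. real (j choose Suc i) * X (Suc i) (j - i))"
      unfolding Suc by (simp add: sum.atMost_Suc binomial_eq_0)
    ultimately show ?thesis by simp
  qed
  show ?thesis
    unfolding r by (simp add: sum.distrib algebra_simps l2)
qed

lemma Bin:
  assumes fin: "finite Q" and g: "\<And>a b. g (a + b) = (\<Sum>q\<in>Q. U q a * W q b)"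
  shows "(Aop (c + d) ^^ j) g (a + b)
     = (\<Sum>i\<le>j. real (j choose i) * (\<Sum>q\<in>Q. (Aop c ^^ i) (U q) a * (Aop d ^^ (j - i)) (W q) b))"
proof (induction j arbitrary: a b)
  case 0
  then show ?case using g by simp
next
  case (Suc j)
  let ?U = "\<lambda>iq. (Aop c ^^ fst iq) (U (snd iq))"
  let ?W = "\<lambda>iq b. real (j choose fst iq) * (Aop d ^^ (j - fst iq)) (W (snd iq)) b"
  have cp: "(\<Sum>iq\<in>{..j} \<times> Q. F iq) = (\<Sum>i\<le>j. \<Sum>q\<in>Q. F (i, q))" for F :: "nat \<times> _ \<Rightarrow> real"
    by (simp add: sum.cartesian_product)
  have rep: "(Aop (c + d) ^^ j) g (a' + b') = (\<Sum>iq\<in>{..j} \<times> Q. ?U iq a' * ?W iq b')" for a' b'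
    unfolding cp by (simp add: Suc.IH sum_distrib_left algebra_simps)
  have "(Aop (c + d) ^^ Suc j) g (a + b) = Aop (c + d) ((Aop (c + d) ^^ j) g) (a + b)"
    by simp
  also have "\<dots> = (\<Sum>iq\<in>{..j} \<times> Q. Aop c (?U iq) a * ?W iq b + ?U iq a * Aop d (?W iq) b)"
    by (rule one_step[where g="(Aop (c + d) ^^ j) g" and U="?U" and W="?W", OF rep])
  also have "\<dots> = (\<Sum>i\<le>j. real (j choose i) * ((\<Sum>q\<in>Q. (Aop c ^^ Suc i) (U q) a * (Aop d ^^ (j - i)) (W q) b)
        + (\<Sum>q\<in>Q. (Aop c ^^ i) (U q) a * (Aop d ^^ (Suc j - i)) (W q) b)))"
  proof -
    have "(\<Sum>iq\<in>{..j} \<times> Q. Aop c (?U iq) a * ?W iq b + ?U iq a * Aop d (?W iq) b)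
       = (\<Sum>i\<le>j. \<Sum>q\<in>Q. real (j choose i) * ((Aop c ^^ Suc i) (U q) a * (Aop d ^^ (j - i)) (W q) b
          + (Aop c ^^ i) (U q) a * (Aop d ^^ (Suc j - i)) (W q) b))"
    proof (subst cp, intro sum.cong refl)
      fix i q assume i: "i \<in> {..j}"
      have e: "Aop d (\<lambda>b. real (j choose i) * (Aop d ^^ (j - i)) (W q) b) b
          = real (j choose i) * (Aop d ^^ (Suc j - i)) (W q) b"
        using i by (simp add: Aop_cmult Suc_diff_le)
      show "Aop c (?U (i, q)) a * ?W (i, q) b + ?U (i, q) a * Aop d (?W (i, q)) b
        = real (j choose i) * ((Aop c ^^ Suc i) (U q) a * (Aop d ^^ (j - i)) (W q) b
          + (Aop c ^^ i) (U q) a * (Aop d ^^ (Suc j - i)) (W q) b)"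
        using e by (simp add: algebra_simps)
    qed
    then show ?thesis by (simp only: distrib_left sum.distrib sum_distrib_left)
  qed
  also have "\<dots> = (\<Sum>i\<le>Suc j. real (Suc j choose i) * (\<Sum>q\<in>Q. (Aop c ^^ i) (U q) a * (Aop d ^^ (Suc j - i)) (W q) b))"
    by (rule pascal_sum[where X="\<lambda>i k. \<Sum>q\<in>Q. (Aop c ^^ i) (U q) a * (Aop d ^^ k) (W q) b"])
  finally show ?case .
qed

lemma reindex3:
  fixes \<alpha> \<beta> :: "nat \<Rightarrow> nat \<Rightarrow> real"
  shows "(\<Sum>j\<le>s. \<Sum>i\<le>j. \<Sum>p\<le>s-j. \<alpha> i p * \<beta> (j-i) (s-j-p))
       = (\<Sum>q\<le>s. (\<Sum>i\<le>q. \<alpha> i (q-i)) * (\<Sum>k\<le>s-q. \<beta> k (s-q-k)))"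
proof -
  have l: "(\<Sum>j\<le>s. \<Sum>i\<le>j. \<Sum>p\<le>s-j. \<alpha> i p * \<beta> (j-i) (s-j-p))
     = (\<Sum>(j,i,p)\<in>(SIGMA j:{..s}. SIGMA i:{..j}. {..s-j}). \<alpha> i p * \<beta> (j-i) (s-j-p))"
    by (subst sum.Sigma[symmetric], simp, simp, intro sum.cong refl, subst sum.Sigma) auto
  have r: "(\<Sum>q\<le>s. (\<Sum>i\<le>q. \<alpha> i (q-i)) * (\<Sum>k\<le>s-q. \<beta> k (s-q-k)))
     = (\<Sum>(q,i,k)\<in>(SIGMA q:{..s}. SIGMA i:{..q}. {..s-q}). \<alpha> i (q-i) * \<beta> k (s-q-k))"
  proof -
    have "(\<Sum>q\<le>s. (\<Sum>i\<le>q. \<alpha> i (q-i)) * (\<Sum>k\<le>s-q. \<beta> k (s-q-k)))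
       = (\<Sum>q\<le>s. \<Sum>ik\<in>{..q} \<times> {..s-q}. \<alpha> (fst ik) (q - fst ik) * \<beta> (snd ik) (s-q-snd ik))"
      by (intro sum.cong refl) (simp add: sum_product sum.cartesian_product case_prod_beta)
    also have "\<dots> = (\<Sum>(q,i,k)\<in>(SIGMA q:{..s}. SIGMA i:{..q}. {..s-q}). \<alpha> i (q-i) * \<beta> k (s-q-k))"
      by (subst sum.Sigma) (auto simp: case_prod_beta)
    finally show ?thesis .
  qed
  have "(\<Sum>(j,i,p)\<in>(SIGMA j:{..s}. SIGMA i:{..j}. {..s-j}). \<alpha> i p * \<beta> (j-i) (s-j-p))
      = (\<Sum>(q,i,k)\<in>(SIGMA q:{..s}. SIGMA i:{..q}. {..s-q}). \<alpha> i (q-i) * \<beta> k (s-q-k))"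
  proof (rule sum.reindex_bij_witness[where j="\<lambda>(j,i,p). (i+p, i, j-i)" and i="\<lambda>(q,i,k). (i+k, i, q-i)"])
    fix a assume "a \<in> (SIGMA j:{..s}. SIGMA i:{..j}. {..s-j})"
    then obtain j i p where a: "a = (j,i,p)" "j \<le> s" "i \<le> j" "p \<le> s - j" by auto
    show "(case case a of (j, i, p) \<Rightarrow> (i + p, i, j - i) of (q, i, k) \<Rightarrow> (i + k, i, q - i)) = a"
      using a by simp
    show "(case a of (j, i, p) \<Rightarrow> (i + p, i, j - i)) \<in> (SIGMA q:{..s}. SIGMA i:{..q}. {..s - q})"
      using a by simp arith
    have "s - j - p = s - (i + p) - (j - i)" using a by simp
    then show "(case case a of (j, i, p) \<Rightarrow> (i + p, i, j - i) of (q, i, k) \<Rightarrow> \<alpha> i (q - i) * \<beta> k (s - q - k)) =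
         (case a of (j, i, p) \<Rightarrow> \<alpha> i p * \<beta> (j - i) (s - j - p))"
      using a by simp
  next
    fix b assume "b \<in> (SIGMA q:{..s}. SIGMA i:{..q}. {..s - q})"
    then obtain q i k where b: "b = (q,i,k)" "q \<le> s" "i \<le> q" "k \<le> s - q" by auto
    show "(case case b of (q, i, k) \<Rightarrow> (i + k, i, q - i) of (j, i, p) \<Rightarrow> (i + p, i, j - i)) = b"
      using b by simp
    show "(case b of (q, i, k) \<Rightarrow> (i + k, i, q - i)) \<in> (SIGMA j:{..s}. SIGMA i:{..j}. {..s - j})"
      using b by simp arith
  qed
  then show ?thesis using l r by simp
qed

lemma L_lemma:
  assumes f: "\<And>a b. f (a + b) = u a * v b"
  shows "Sop (c + d) f (a + b) = Sop c u a * Sop d v b"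
proof (rule fps_ext)
  fix s
  define \<alpha> where "\<alpha> = (\<lambda>i p. (Aop c ^^ i) (\<lambda>h. fps_nth (u h) p) a / fact i)"
  define \<beta> where "\<beta> = (\<lambda>k l. (Aop d ^^ k) (\<lambda>h. fps_nth (v h) l) b / fact k)"
  have lj: "(Aop (c + d) ^^ j) (\<lambda>h. fps_nth (f h) (s - j)) (a + b) / fact j
      = (\<Sum>i\<le>j. \<Sum>p\<le>s-j. \<alpha> i p * \<beta> (j-i) (s-j-p))" if "j \<le> s" for j
  proof -
    define X where "X = (\<lambda>i p. (Aop c ^^ i) (\<lambda>h. fps_nth (u h) p) a * (Aop d ^^ (j - i)) (\<lambda>h. fps_nth (v h) (s - j - p)) b)"
    have g: "fps_nth (f (a' + b')) (s - j) = (\<Sum>p\<in>{..s-j}. (\<lambda>p a. fps_nth (u a) p) p a' * (\<lambda>p b. fps_nth (v b) (s - j - p)) p b')" for a' b'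
      by (simp add: f fps_mult_nth atLeast0AtMost)
    have "(Aop (c + d) ^^ j) (\<lambda>h. fps_nth (f h) (s - j)) (a + b)
       = (\<Sum>i\<le>j. real (j choose i) * (\<Sum>p\<le>s-j. X i p))"
      unfolding X_def by (rule Bin[where g="\<lambda>h. fps_nth (f h) (s - j)", OF _ g]) simp
    then have "(Aop (c + d) ^^ j) (\<lambda>h. fps_nth (f h) (s - j)) (a + b) / fact j
       = (\<Sum>i\<le>j. \<Sum>p\<le>s-j. real (j choose i) / fact j * X i p)"
      by (simp add: sum_divide_distrib sum_distrib_left)
    also have "\<dots> = (\<Sum>i\<le>j. \<Sum>p\<le>s-j. \<alpha> i p * \<beta> (j-i) (s-j-p))"
    proof (intro sum.cong refl)
      fix i p assume "i \<in> {..j}"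
      then have "real (j choose i) / fact j = 1 / (fact i * fact (j - i))"
        by (simp add: binomial_fact)
      then show "real (j choose i) / fact j * X i p = \<alpha> i p * \<beta> (j-i) (s-j-p)"
        by (simp add: X_def \<alpha>_def \<beta>_def)
    qed
    finally show ?thesis .
  qed
  have "fps_nth (Sop (c + d) f (a + b)) s = (\<Sum>j\<le>s. (Aop (c + d) ^^ j) (\<lambda>h. fps_nth (f h) (s - j)) (a + b) / fact j)"
    by (simp add: Sop_def)
  also have "\<dots> = (\<Sum>j\<le>s. \<Sum>i\<le>j. \<Sum>p\<le>s-j. \<alpha> i p * \<beta> (j-i) (s-j-p))"
    by (intro sum.cong refl) (simp add: lj)
  also have "\<dots> = (\<Sum>q\<le>s. (\<Sum>i\<le>q. \<alpha> i (q-i)) * (\<Sum>k\<le>s-q. \<beta> k (s-q-k)))"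
    by (rule reindex3)
  also have "\<dots> = fps_nth (Sop c u a * Sop d v b) s"
    by (simp add: fps_mult_nth atLeast0AtMost Sop_def \<alpha>_def \<beta>_def)
  finally show "fps_nth (Sop (c + d) f (a + b)) s = fps_nth (Sop c u a * Sop d v b) s" .
qed

lemma V_lump: "Vch (c + d) x k (a + b) = Vch c x k a * Vch d x k b"
proof (induction k arbitrary: a b)
  case 0
  then show ?case by simp
next
  case (Suc k)
  show ?case
  proof (cases "k = 0")
    case True
    then show ?thesis using Suc.IH by (simp add: L_lemma)
  next
    case False
    have "Dop x (Vch (c + d) x k) (a' + b') = Dop x (Vch c x k) a' * Dop x (Vch d x k) b'" for a' b'
    proof -
      have "fps_const (x ^ (a' + b')) = fps_const (x ^ a') * fps_const (x ^ b')"
        by (simp add: power_add)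
      then show ?thesis by (simp add: Dop_def Suc.IH mult_ac)
    qed
    then show ?thesis using False by (simp add: L_lemma)
  qed
qed


fun Phi :: "real \<Rightarrow> nat \<Rightarrow> (nat \<Rightarrow> real fps) \<Rightarrow> nat \<Rightarrow> real fps" where
  "Phi x 0 g = g"
| "Phi x (Suc 0) g = Sop 1 g"
| "Phi x (Suc (Suc n)) g = Phi x (Suc n) (Dop x (Sop 1 g))"

lemma Phi_outer: "Phi x (Suc (Suc n)) g = Sop 1 (Dop x (Phi x (Suc n) g))"
  by (induction n arbitrary: g) auto

lemma V1_Phi: "Vch 1 x (Suc k) = Phi x (Suc k) (Vch 1 x 0)"
proof (induction k)
  case 0 then show ?case by simp
next
  case (Suc k)
  then show ?case by (simp only: Phi_outer) simp
qed

lemma A1_pow: "e \<le> 1 \<Longrightarrow> (Aop 1 ^^ j) f e = f ((e + j) mod 2)"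
proof (induction j arbitrary: e)
  case 0 then show ?case by simp
next
  case (Suc j)
  have "(Aop 1 ^^ Suc j) f e = (1 - real e) * (Aop 1 ^^ j) f (Suc e) + real e * (Aop 1 ^^ j) f (e - 1)"
    by (simp only: funpow.simps o_apply Aop_def)
  moreover have "e = 0 \<or> e = 1" using Suc.prems by auto
  moreover have "(0 + Suc j) mod 2 = (1 + j) mod 2" "(1 + Suc j) mod 2 = (0 + j) mod 2" by presburger+
  ultimately show ?case using Suc.IH[of 0] Suc.IH[of 1] by auto
qed

lemma S1_exp:
  assumes s: "s = 1 \<or> s = -1"
  shows "fps_exp s * (g 0 + fps_const s * g 1) = Sop 1 g 0 + fps_const s * Sop 1 g 1"
proof (rule fps_ext)
  fix u
  have t: "s ^ j * (fps_nth (g 0) t + s * fps_nth (g 1) t)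
     = fps_nth (g (j mod 2)) t + s * fps_nth (g (Suc j mod 2)) t" for j t
  proof (cases "even j")
    case True
    then obtain m where "j = 2 * m" by auto
    then show ?thesis using s by (auto simp: power_mult)
  next
    case False
    then obtain m where m: "j = 2 * m + 1" using oddE by blast
    then have "j mod 2 = 1" "Suc j mod 2 = 0" by auto
    moreover have "s ^ j = s" using s m by (auto simp: power_mult)
    ultimately show ?thesis using s by (auto simp: algebra_simps)
  qed
  have "fps_nth (fps_exp s * (g 0 + fps_const s * g 1)) u
     = (\<Sum>j\<le>u. s ^ j / fact j * (fps_nth (g 0) (u - j) + s * fps_nth (g 1) (u - j)))"
    by (subst fps_mult_nth) (simp add: atLeast0AtMost)
  also have "\<dots> = (\<Sum>j\<le>u. (fps_nth (g (j mod 2)) (u - j) + s * fps_nth (g ((1 + j) mod 2)) (u - j)) / fact j)"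
    by (intro sum.cong refl) (simp add: t[unfolded One_nat_def])
  also have "\<dots> = fps_nth (Sop 1 g 0 + fps_const s * Sop 1 g 1) u"
    by (simp add: Sop_def A1_pow sum_distrib_left sum.distrib add_divide_distrib)
  finally show "fps_nth (fps_exp s * (g 0 + fps_const s * g 1)) u = fps_nth (Sop 1 g 0 + fps_const s * Sop 1 g 1) u" .
qed

lemma sum_PiE_insert:
  "x \<notin> S \<Longrightarrow> (\<Sum>f\<in>PiE (insert x S) T. F f) = (\<Sum>y\<in>T x. \<Sum>g\<in>PiE S T. F (g(x := y)))"
proof -
  assume x: "x \<notin> S"
  have "(\<Sum>f\<in>PiE (insert x S) T. F f) = (\<Sum>yg\<in>T x \<times> PiE S T. F ((\<lambda>(y, g). g(x := y)) yg))"
    unfolding PiE_insert_eq by (rule sum.reindex[OF inj_combinator[OF x], unfolded o_def])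
  also have "\<dots> = (\<Sum>y\<in>T x. \<Sum>g\<in>PiE S T. F (g(x := y)))"
    by (simp add: sum.cartesian_product, intro sum.cong refl) auto
  finally show ?thesis .
qed

lemma configs_Suc: "configs (Suc n) = PiE (insert (Suc n) {1..n}) (\<lambda>_. {-1, 1})"
  unfolding configs_def by (simp add: atLeastAtMostSuc_conv)

lemma weight_upd:
  assumes "n \<ge> 1"
  shows "ising_weight (Suc n) \<beta> (\<tau>(Suc n := y)) = ising_weight n \<beta> \<tau> * exp (\<beta> * (\<tau> n * y))"
proof -
  have "(\<Sum>i\<in>{1..<Suc n}. (\<tau>(Suc n := y)) i * (\<tau>(Suc n := y)) (i + 1))
      = (\<Sum>i\<in>{1..<n}. \<tau> i * \<tau> (i + 1)) + \<tau> n * y"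
    using assms by (simp add: sum.atLeastLessThan_Suc)
  then show ?thesis
    unfolding ising_weight_def by (simp add: distrib_left exp_add)
qed

lemma mag_upd: "magnetization (Suc n) (\<tau>(Suc n := y)) = magnetization n \<tau> + y"
  unfolding magnetization_def by simp

lemma inner_two:
  assumes t: "t = 1 \<or> t = -1"
  shows "(\<Sum>y\<in>{-1, 1::real}. fps_const (exp (\<beta> * (t * y))) * (P + fps_const y * Q))
    = fps_const (2 * cosh \<beta>) * (Dop (tanh \<beta>) (\<lambda>h. if h = 0 then P else Q) 0
        + fps_const t * Dop (tanh \<beta>) (\<lambda>h. if h = 0 then P else Q) 1)"
proof (rule fps_ext)
  fix u
  have c: "cosh \<beta> \<noteq> 0" by (simp add: cosh_real_pos[of \<beta>] less_imp_neq[symmetric])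
  have "2 * cosh \<beta> * tanh \<beta> = exp \<beta> - exp (- \<beta>)"
    using c by (simp add: tanh_def sinh_def)
  then have key: "tanh \<beta> * exp \<beta> + tanh \<beta> * exp (- \<beta>) = exp \<beta> - exp (- \<beta>)"
    by (simp add: cosh_def algebra_simps)
  have k: "fps_nth Q u * exp (- \<beta>) + (exp \<beta> * (tanh \<beta> * fps_nth Q u) + tanh \<beta> * (fps_nth Q u * exp (- \<beta>)))
      = exp \<beta> * fps_nth Q u"
  proof -
    have "(tanh \<beta> * exp \<beta> + tanh \<beta> * exp (- \<beta>)) * fps_nth Q u = (exp \<beta> - exp (- \<beta>)) * fps_nth Q u"
      using key by simp
    then show ?thesis by (simp add: algebra_simps)
  qed
  show "fps_nth (\<Sum>y\<in>{-1, 1::real}. fps_const (exp (\<beta> * (t * y))) * (P + fps_const y * Q)) u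
    = fps_nth (fps_const (2 * cosh \<beta>) * (Dop (tanh \<beta>) (\<lambda>h. if h = 0 then P else Q) 0
        + fps_const t * Dop (tanh \<beta>) (\<lambda>h. if h = 0 then P else Q) 1)) u"
    using t by (auto simp: Dop_def cosh_def fps_sum_nth algebra_simps k)
qed

lemma Phi_Suc: "n \<ge> 1 \<Longrightarrow> Phi x (Suc n) g = Phi x n (Dop x (Sop 1 g))"
  by (cases n) auto

lemma configs_val: "\<tau> \<in> configs n \<Longrightarrow> 1 \<le> i \<Longrightarrow> i \<le> n \<Longrightarrow> \<tau> i = 1 \<or> \<tau> i = -1"
  unfolding configs_def by (auto simp: PiE_iff)

lemma ising_chain:
  assumes "n \<ge> 1"
  shows "(\<Sum>\<sigma>\<in>configs n. fps_const (ising_weight n \<beta> \<sigma>) * fps_exp (magnetization n \<sigma>) * (g 0 + fps_const (\<sigma> n) * g 1))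
    = fps_const (2 * (2 * cosh \<beta>) ^ (n - 1)) * Phi (tanh \<beta>) n g 0"
  using assms
proof (induction n arbitrary: g rule: nat_induct_at_least)
  case base
  have c1: "configs 1 = PiE (insert 1 {}) (\<lambda>_. {-1, 1::real})"
    unfolding configs_def by simp
  have "(\<Sum>\<sigma>\<in>configs 1. fps_const (ising_weight 1 \<beta> \<sigma>) * fps_exp (magnetization 1 \<sigma>) * (g 0 + fps_const (\<sigma> 1) * g 1))
     = (\<Sum>y\<in>{-1, 1::real}. fps_exp y * (g 0 + fps_const y * g 1))"
    unfolding c1 by (subst sum_PiE_insert) (auto simp: ising_weight_def magnetization_def)
  also have "\<dots> = (\<Sum>y\<in>{-1, 1::real}. Sop 1 g 0 + fps_const y * Sop 1 g 1)"
    using S1_exp[of 1 g] S1_exp[of "-1" g] by simp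
  also have "\<dots> = fps_const 2 * Sop 1 g 0"
    by (simp add: algebra_simps fps_const_neg[symmetric] fps_const_add[symmetric] del: fps_const_neg fps_const_add)
  finally show ?case by simp
next
  case (Suc n)
  let ?x = "tanh \<beta>"
  let ?h = "Dop ?x (Sop 1 g)"
  have notin: "Suc n \<notin> {1..n}" by simp
  have trm: "fps_const (ising_weight (Suc n) \<beta> (\<tau>(Suc n := y))) * fps_exp (magnetization (Suc n) (\<tau>(Suc n := y)))
      * (g 0 + fps_const ((\<tau>(Suc n := y)) (Suc n)) * g 1)
    = fps_const (ising_weight n \<beta> \<tau>) * fps_exp (magnetization n \<tau>) *
      (fps_const (exp (\<beta> * (\<tau> n * y))) * (fps_exp y * (g 0 + fps_const y * g 1)))" for \<tau> y
    using Suc.hyps by (simp add: weight_upd mag_upd fps_exp_add_mult fps_const_mult[symmetric] mult_ac del: fps_const_mult)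
  have inner: "(\<Sum>y\<in>{-1, 1::real}. fps_const (exp (\<beta> * (\<tau> n * y))) * (fps_exp y * (g 0 + fps_const y * g 1)))
     = fps_const (2 * cosh \<beta>) * (?h 0 + fps_const (\<tau> n) * ?h 1)" if "\<tau> \<in> configs n" for \<tau>
  proof -
    have t: "\<tau> n = 1 \<or> \<tau> n = -1" using configs_val[OF that] Suc.hyps by auto
    have "(\<Sum>y\<in>{-1, 1::real}. fps_const (exp (\<beta> * (\<tau> n * y))) * (fps_exp y * (g 0 + fps_const y * g 1)))
       = (\<Sum>y\<in>{-1, 1::real}. fps_const (exp (\<beta> * (\<tau> n * y))) * (Sop 1 g 0 + fps_const y * Sop 1 g 1))"
      using S1_exp[of 1 g] S1_exp[of "-1" g] by simp
    also have "\<dots> = fps_const (2 * cosh \<beta>) * (Dop ?x (\<lambda>h. if h = 0 then Sop 1 g 0 else Sop 1 g 1) 0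
        + fps_const (\<tau> n) * Dop ?x (\<lambda>h. if h = 0 then Sop 1 g 0 else Sop 1 g 1) 1)"
      by (rule inner_two[OF t])
    also have "\<dots> = fps_const (2 * cosh \<beta>) * (?h 0 + fps_const (\<tau> n) * ?h 1)"
      by (simp add: Dop_def)
    finally show ?thesis .
  qed
  have "(\<Sum>\<sigma>\<in>configs (Suc n). fps_const (ising_weight (Suc n) \<beta> \<sigma>) * fps_exp (magnetization (Suc n) \<sigma>) * (g 0 + fps_const (\<sigma> (Suc n)) * g 1))
     = (\<Sum>y\<in>{-1, 1::real}. \<Sum>\<tau>\<in>configs n. fps_const (ising_weight n \<beta> \<tau>) * fps_exp (magnetization n \<tau>) *
      (fps_const (exp (\<beta> * (\<tau> n * y))) * (fps_exp y * (g 0 + fps_const y * g 1))))"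
    by (simp only: configs_Suc sum_PiE_insert[OF notin] configs_def[symmetric] trm)
  also have "\<dots> = (\<Sum>\<tau>\<in>configs n. fps_const (ising_weight n \<beta> \<tau>) * fps_exp (magnetization n \<tau>) *
      (\<Sum>y\<in>{-1, 1::real}. fps_const (exp (\<beta> * (\<tau> n * y))) * (fps_exp y * (g 0 + fps_const y * g 1))))"
    by (subst sum.swap) (simp add: distrib_left)
  also have "\<dots> = (\<Sum>\<tau>\<in>configs n. fps_const (2 * cosh \<beta>) * (fps_const (ising_weight n \<beta> \<tau>) * fps_exp (magnetization n \<tau>) *
      (?h 0 + fps_const (\<tau> n) * ?h 1)))"
  proof (intro sum.cong refl)
    fix \<tau> assume "\<tau> \<in> configs n"
    show "fps_const (ising_weight n \<beta> \<tau>) * fps_exp (magnetization n \<tau>) *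
      (\<Sum>y\<in>{-1, 1::real}. fps_const (exp (\<beta> * (\<tau> n * y))) * (fps_exp y * (g 0 + fps_const y * g 1)))
      = fps_const (2 * cosh \<beta>) * (fps_const (ising_weight n \<beta> \<tau>) * fps_exp (magnetization n \<tau>) *
      (?h 0 + fps_const (\<tau> n) * ?h 1))"
      by (subst inner[OF \<open>\<tau> \<in> configs n\<close>]) (simp only: mult_ac)
  qed
  also have "\<dots> = fps_const (2 * cosh \<beta>) * (\<Sum>\<tau>\<in>configs n. fps_const (ising_weight n \<beta> \<tau>) * fps_exp (magnetization n \<tau>) *
      (?h 0 + fps_const (\<tau> n) * ?h 1))"
    by (simp only: sum_distrib_left)
  also have "\<dots> = fps_const (2 * cosh \<beta>) * (fps_const (2 * (2 * cosh \<beta>) ^ (n - 1)) * Phi ?x n ?h 0)"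
    by (simp only: Suc.IH)
  also have "\<dots> = fps_const (2 * (2 * cosh \<beta>) ^ (Suc n - 1)) * Phi ?x (Suc n) g 0"
  proof -
    have r: "2 * cosh \<beta> * (2 * (2 * cosh \<beta>) ^ (n - 1)) = 2 * (2 * cosh \<beta>) ^ (Suc n - 1)"
      using Suc.hyps by (cases n) auto
    have "fps_const (2 * cosh \<beta>) * (fps_const (2 * (2 * cosh \<beta>) ^ (n - 1)) * P)
        = fps_const (2 * (2 * cosh \<beta>) ^ (Suc n - 1)) * P" for P
    proof -
      have m: "fps_const a * (fps_const b * P) = fps_const (a * b) * P" for a b :: real
        by (simp add: mult.assoc)
      show ?thesis by (subst m) (simp only: r)
    qed
    then show ?thesis using Phi_Suc[OF Suc.hyps, of ?x g] by simp
  qed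
  finally show ?case .
qed


definition Fising :: "nat \<Rightarrow> real \<Rightarrow> real fps" where
  "Fising n \<beta> = (\<Sum>\<sigma>\<in>configs n. fps_const (ising_weight n \<beta> \<sigma> / partition_fn n \<beta>) * fps_exp (magnetization n \<sigma>))"

lemma finite_configs: "finite (configs n)"
  unfolding configs_def by (auto intro!: finite_PiE)

lemma configs_ne: "configs n \<noteq> {}"
  unfolding configs_def by (auto simp: PiE_eq_empty_iff)

lemma partition_pos: "partition_fn n \<beta> > 0"
  unfolding partition_fn_def ising_weight_def
  using finite_configs configs_ne by (intro sum_pos) auto

lemma expect_eq: "ising_expect n \<beta> (\<lambda>\<sigma>. exp (z * magnetization n \<sigma>))
   = (\<Sum>\<sigma>\<in>configs n. ising_weight n \<beta> \<sigma> / partition_fn n \<beta> * exp (magnetization n \<sigma> * z))"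
  unfolding ising_expect_def by (simp add: sum_divide_distrib mult_ac)

lemma expect_pos: "ising_expect n \<beta> (\<lambda>\<sigma>. exp (z * magnetization n \<sigma>)) > 0"
  unfolding expect_eq using finite_configs configs_ne partition_pos[of n \<beta>]
  by (intro sum_pos) (auto simp: ising_weight_def)

lemma expect_fps: "(\<lambda>z. ising_expect n \<beta> (\<lambda>\<sigma>. exp (z * magnetization n \<sigma>))) has_fps_expansion Fising n \<beta>"
  unfolding expect_eq Fising_def
  by (intro has_fps_expansion_sum has_fps_expansion_cmult_left has_fps_expansion_exp)

lemma Fising_0: "fps_nth (Fising n \<beta>) 0 = 1"
proof -
  have "fps_nth (Fising n \<beta>) 0 = (\<Sum>\<sigma>\<in>configs n. ising_weight n \<beta> \<sigma>) / partition_fn n \<beta>"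
    unfolding Fising_def by (simp add: fps_sum_nth sum_divide_distrib)
  then show ?thesis using partition_pos[of n \<beta>] by (simp add: partition_fn_def)
qed

lemma expect_deriv:
  "((\<lambda>z. ising_expect n \<beta> (\<lambda>\<sigma>. exp (z * magnetization n \<sigma>))) has_real_derivative
     (\<Sum>\<sigma>\<in>configs n. ising_weight n \<beta> \<sigma> / partition_fn n \<beta> * (exp (magnetization n \<sigma> * z) * magnetization n \<sigma>))) (at z)"
  unfolding expect_eq by (intro DERIV_sum DERIV_cmult) (auto intro!: derivative_eq_intros)

lemma fps_exp_at0: "f has_fps_expansion F \<Longrightarrow> f 0 = fps_nth F 0"
  by (auto simp: has_fps_expansion_def eval_fps_at_0 dest: eventually_nhds_x_imp_x)

lemma funpow_fps_deriv_nth0: "fps_nth ((fps_deriv ^^ k) (H :: real fps)) 0 = fact k * fps_nth H k"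
proof (induction k arbitrary: H)
  case 0 then show ?case by simp
next
  case (Suc k)
  have "(fps_deriv ^^ Suc k) H = (fps_deriv ^^ k) (fps_deriv H)"
    by (simp only: funpow_Suc_right o_apply)
  then show ?case using Suc.IH[of "fps_deriv H"] by (simp add: algebra_simps mult_ac)
qed

lemma funpow_deriv_fps: "g has_fps_expansion G \<Longrightarrow> (deriv ^^ k) g has_fps_expansion (fps_deriv ^^ k) G"
  by (induction k) (auto intro: has_fps_expansion_deriv)

lemma cumulant_fps:
  assumes "s \<ge> 1"
  shows "cumulant_M n \<beta> s = fact (s - 1) * fps_nth (fps_deriv (Fising n \<beta>) / Fising n \<beta>) (s - 1)"
proof -
  define f where "f = (\<lambda>z. ising_expect n \<beta> (\<lambda>\<sigma>. exp (z * magnetization n \<sigma>)))"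
  have dl: "deriv (\<lambda>z. ln (f z)) = (\<lambda>z. deriv f z / f z)"
  proof
    fix z
    obtain D where D: "(f has_real_derivative D) (at z)"
      using expect_deriv unfolding f_def by blast
    then have "deriv f z = D" by (rule DERIV_imp_deriv)
    then have fd: "(f has_real_derivative deriv f z) (at z)" using D by simp
    have "(ln has_real_derivative 1 / f z) (at (f z))"
      by (rule DERIV_ln_divide) (simp add: f_def expect_pos)
    then have "((\<lambda>z. ln (f z)) has_real_derivative (1 / f z * deriv f z)) (at z)"
      by (rule DERIV_chain2[OF _ fd])
    then show "deriv (\<lambda>z. ln (f z)) z = deriv f z / f z"
      by (simp add: DERIV_imp_deriv)
  qed
  have fe: "(\<lambda>z. deriv f z / f z) has_fps_expansion fps_deriv (Fising n \<beta>) / Fising n \<beta>"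
    using expect_fps Fising_0 unfolding f_def
    by (intro has_fps_expansion_divide' has_fps_expansion_deriv) auto
  obtain k where k: "s = Suc k" using assms by (cases s) auto
  have "cumulant_M n \<beta> s = (deriv ^^ k) (deriv (\<lambda>z. ln (f z))) 0"
    unfolding cumulant_M_def k f_def by (simp only: funpow_Suc_right o_apply)
  also have "\<dots> = (deriv ^^ k) (\<lambda>z. deriv f z / f z) 0"
    by (simp only: dl)
  also have "\<dots> = fps_nth ((fps_deriv ^^ k) (fps_deriv (Fising n \<beta>) / Fising n \<beta>)) 0"
    by (rule fps_exp_at0[OF funpow_deriv_fps[OF fe]])
  also have "\<dots> = fact (s - 1) * fps_nth (fps_deriv (Fising n \<beta>) / Fising n \<beta>) (s - 1)"
    by (simp add: funpow_fps_deriv_nth0 k)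
  finally show ?thesis .
qed


definition stepP :: "nat \<Rightarrow> nat \<Rightarrow> real poly" where
  "stepP h h' = (if h' = Suc h then [:- real h, 1:] else [:real h:])"

fun wtP :: "nat list \<Rightarrow> real poly" where
  "wtP [] = 1"
| "wtP [h] = 1"
| "wtP (h # h' # t) = stepP h h' * wtP (h' # t)"

lemma poly_wtP: "poly (wtP p) c = wt c p"
  by (induction p rule: wtP.induct) (auto simp: stepP_def stepw_def)

definition RP :: "real \<Rightarrow> nat \<Rightarrow> nat \<Rightarrow> real poly" where
  "RP x k u = (\<Sum>p\<leftarrow>pw 0 u. smult (Gf x k p) (wtP p))"

lemma poly_sum_list_smult: "poly (\<Sum>p\<leftarrow>xs. smult (a p) (q p)) c = (\<Sum>p\<leftarrow>xs. a p * poly (q p) c)"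
  by (induction xs) auto

lemma coeff_sum_list_smult: "coeff (\<Sum>p\<leftarrow>xs. smult (a p) (q p)) i = (\<Sum>p\<leftarrow>xs. a p * coeff (q p) i)"
  by (induction xs) auto

lemma poly_RP: "poly (RP x k u) c = fps_nth (Vch c x k 0) u"
  unfolding RP_def poly_sum_list_smult V_exp by (simp add: poly_wtP mult.commute)

lemma Gf_single: "Gf x k [h] = (if h = 0 then 1 else 0)"
proof (induction k)
  case 0 then show ?case by simp
next
  case (Suc k)
  have "Gf x (Suc k) [h] = (if k = 0 then 1 else x ^ h) * Gf x k [h]"
    by (subst Gf.simps) simp
  then show ?case using Suc by simp
qed

lemma V0: "Vch 0 x k 0 = 1"
proof (rule fps_ext)
  fix u
  show "fps_nth (Vch 0 x k 0) u = fps_nth 1 u"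
  proof (cases u)
    case 0
    then show ?thesis by (simp add: V_exp Gf_single)
  next
    case (Suc u')
    have "(\<Sum>p\<leftarrow>pw 0 u. wt 0 p * Gf x k p) = (\<Sum>p\<leftarrow>pw 0 u. 0)"
      by (intro sum_list_map_cong) (auto simp: Suc wt_up)
    then show ?thesis by (simp add: V_exp Suc)
  qed
qed

lemma V_nat_pow: "Vch (real N) x k 0 = (Vch 1 x k 0) ^ N"
proof (induction N)
  case 0 then show ?case by (simp add: V0)
next
  case (Suc N)
  have "Vch (real N + 1) x k (0 + 0) = Vch (real N) x k 0 * Vch 1 x k 0"
    by (rule V_lump)
  then show ?case using Suc by (simp add: mult.commute add.commute)
qed

lemma poly_eq_nat:
  fixes p q :: "real poly"
  assumes "\<And>N::nat. N \<ge> 1 \<Longrightarrow> poly p (real N) = poly q (real N)"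
  shows "p = q"
proof (rule ccontr)
  assume "p \<noteq> q"
  then have "p - q \<noteq> 0" by simp
  then have fin: "finite {x. poly (p - q) x = 0}" by (rule poly_roots_finite)
  have "poly (p - q) (real (Suc N)) = 0" for N
    using assms[of "Suc N"] by simp
  then have "range (\<lambda>N. real (Suc N)) \<subseteq> {x. poly (p - q) x = 0}"
    by auto
  moreover have "infinite (range (\<lambda>N. real (Suc N)))"
    by (rule range_inj_infinite) (auto simp: inj_on_def)
  ultimately show False using fin finite_subset by blast
qed

lemma X_mult_coeff1: "coeff ([:0, 1:] * q) 1 = coeff (q :: real poly) 0"
  by simp


lemma V_nth0: "fps_nth (Vch c x k 0) 0 = 1"
  by (simp add: V_exp Gf_single)

lemma F_eq_V:
  assumes "n \<ge> 1"
  shows "Fising n \<beta> = Vch 1 (tanh \<beta>) n 0"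
proof -
  define C where "C = 2 * (2 * cosh \<beta>) ^ (n - 1)"
  obtain k where k: "n = Suc k" using assms by (cases n) auto
  have main: "(\<Sum>\<sigma>\<in>configs n. fps_const (ising_weight n \<beta> \<sigma>) * fps_exp (magnetization n \<sigma>))
      = fps_const C * Vch 1 (tanh \<beta>) n 0"
  proof -
    have e: "Phi (tanh \<beta>) n (Vch 1 (tanh \<beta>) 0) = Vch 1 (tanh \<beta>) n"
      unfolding k by (rule V1_Phi[symmetric])
    show ?thesis
      using ising_chain[OF assms, of \<beta> "Vch 1 (tanh \<beta>) 0"] unfolding e C_def
      by (simp del: Vch.simps(2))
  qed
  have "partition_fn n \<beta> = fps_nth (\<Sum>\<sigma>\<in>configs n. fps_const (ising_weight n \<beta> \<sigma>) * fps_exp (magnetization n \<sigma>)) 0"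
    by (simp add: partition_fn_def fps_sum_nth)
  also have "\<dots> = C" unfolding main by (simp add: V_nth0)
  finally have Z: "partition_fn n \<beta> = C" .
  have "Fising n \<beta> = fps_const (1 / partition_fn n \<beta>) * (\<Sum>\<sigma>\<in>configs n. fps_const (ising_weight n \<beta> \<sigma>) * fps_exp (magnetization n \<sigma>))"
    unfolding Fising_def by (simp add: sum_distrib_left mult.assoc[symmetric])
  also have "\<dots> = Vch 1 (tanh \<beta>) n 0"
    unfolding main Z using partition_pos[of n \<beta>] Z
    by (simp add: mult.assoc[symmetric] fps_const_mult[symmetric] del: fps_const_mult)
  finally show ?thesis .
qed

lemma kappa_formula:
  assumes n: "n \<ge> 1" and s: "s \<ge> 1"
  shows "cumulant_M n \<beta> s = fact s * coeff (RP (tanh \<beta>) n s) 1"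
proof -
  define x where "x = tanh \<beta>"
  define F where "F = Fising n \<beta>"
  define Q where "Q = fps_deriv F / F"
  obtain t where t: "s = Suc t" using s by (cases s) auto
  have F0: "fps_nth F 0 = 1" unfolding F_def by (rule Fising_0)
  have FQ: "F * Q = fps_deriv F"
    unfolding Q_def using F0 by (simp add: fps_divide_unit mult.left_commute inverse_mult_eq_1')
  have FV: "F = Vch 1 x n 0" unfolding F_def x_def by (rule F_eq_V[OF n])
  have FN: "fps_nth (F ^ N) i = poly (RP x n i) (real N)" for N i
    by (simp add: poly_RP V_nat_pow FV)
  have pid: "poly (smult (real (Suc t)) (RP x n (Suc t))) (real N)
      = poly ([:0, 1:] * (\<Sum>i\<le>t. smult (fps_nth Q (t - i)) (RP x n i))) (real N)" if "N \<ge> 1" for N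
  proof -
    have "fps_deriv (F ^ N) = of_nat N * fps_deriv F * F ^ (N - 1)"
      by (rule fps_deriv_power')
    also have "\<dots> = of_nat N * (F ^ N * Q)"
    proof -
      have "F ^ N = F * F ^ (N - 1)" using that by (cases N) auto
      then show ?thesis by (simp add: FQ[symmetric] mult_ac)
    qed
    finally have d: "fps_deriv (F ^ N) = of_nat N * (F ^ N * Q)" .
    have "fps_nth (fps_deriv (F ^ N)) t = real (Suc t) * fps_nth (F ^ N) (Suc t)"
      by simp
    moreover have "fps_nth (of_nat N * (F ^ N * Q)) t = real N * (\<Sum>i\<le>t. fps_nth (F ^ N) i * fps_nth Q (t - i))"
      by (subst fps_of_nat[symmetric], subst fps_mult_left_const_nth) (simp add: fps_mult_nth atLeast0AtMost)
    ultimately have "real (Suc t) * fps_nth (F ^ N) (Suc t) = real N * (\<Sum>i\<le>t. fps_nth (F ^ N) i * fps_nth Q (t - i))"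
      using d by simp
    then show ?thesis
      by (simp add: FN poly_sum mult_ac)
  qed
  have peq: "smult (real (Suc t)) (RP x n (Suc t)) = [:0, 1:] * (\<Sum>i\<le>t. smult (fps_nth Q (t - i)) (RP x n i))"
    by (rule poly_eq_nat) (rule pid)
  have "real (Suc t) * coeff (RP x n (Suc t)) 1 = coeff (\<Sum>i\<le>t. smult (fps_nth Q (t - i)) (RP x n i)) 0"
    using arg_cong[OF peq, of "\<lambda>p. coeff p 1"] by (simp add: X_mult_coeff1)
  also have "\<dots> = (\<Sum>i\<le>t. fps_nth Q (t - i) * poly (RP x n i) 0)"
    by (simp add: coeff_sum poly_0_coeff_0)
  also have "\<dots> = (\<Sum>i\<le>t. if i = 0 then fps_nth Q (t - i) else 0)"
    by (intro sum.cong refl) (simp add: poly_RP V0)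
  also have "\<dots> = fps_nth Q t" by simp
  finally have Qt: "fps_nth Q t = real (Suc t) * coeff (RP x n (Suc t)) 1" by simp
  have "cumulant_M n \<beta> s = fact t * fps_nth Q t"
    using cumulant_fps[OF s, of n \<beta>] unfolding Q_def F_def t by simp
  also have "\<dots> = fact s * coeff (RP (tanh \<beta>) n s) 1"
    unfolding Qt t x_def by simp
  finally show ?thesis .
qed


definition isw :: "nat \<Rightarrow> nat \<Rightarrow> nat list \<Rightarrow> bool" where
  "isw h j p \<longleftrightarrow> length p = Suc j \<and> p ! 0 = h \<and> (\<forall>k<j. p ! (k+1) = p ! k + 1 \<or> p ! k = p ! (k+1) + 1)"

lemma pw_isw: "p \<in> set (pw h j) \<Longrightarrow> isw h j p"
proof (induction j arbitrary: h p)
  case 0 then show ?case by (auto simp: isw_def)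
next
  case (Suc j)
  then obtain q h' where p: "p = h # q" and q: "q \<in> set (pw h' j)" and h': "h' = Suc h \<or> (h > 0 \<and> h' = h - 1)"
    by (auto split: if_splits)
  have iq: "isw h' j q" using Suc.IH[OF q] .
  show ?case unfolding isw_def
  proof (intro conjI allI impI)
    show "length p = Suc (Suc j)" using iq p by (simp add: isw_def)
    show "p ! 0 = h" using p by simp
    fix k assume k: "k < Suc j"
    show "p ! (k + 1) = p ! k + 1 \<or> p ! k = p ! (k + 1) + 1"
    proof (cases k)
      case 0 then show ?thesis using p iq h' by (auto simp: isw_def)
    next
      case (Suc k') then show ?thesis using p iq k by (auto simp: isw_def)
    qed
  qed
qed

lemma isw_pw: "isw h j p \<Longrightarrow> p \<in> set (pw h j)"
proof (induction j arbitrary: h p)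
  case 0
  then obtain a where "p = [a]" by (cases p) (auto simp: isw_def)
  then show ?case using 0 by (simp add: isw_def)
next
  case (Suc j)
  obtain a q where p: "p = a # q" using Suc.prems by (cases p) (auto simp: isw_def)
  have a: "a = h" using Suc.prems p by (simp add: isw_def)
  have lq: "length q = Suc j" using Suc.prems p by (simp add: isw_def)
  have st: "\<forall>k<j. q ! (k+1) = q ! k + 1 \<or> q ! k = q ! (k+1) + 1"
  proof (intro allI impI)
    fix k assume "k < j"
    then have "Suc k < Suc j" by simp
    then have "p ! (Suc k + 1) = p ! Suc k + 1 \<or> p ! Suc k = p ! (Suc k + 1) + 1"
      using Suc.prems unfolding isw_def by blast
    then show "q ! (k+1) = q ! k + 1 \<or> q ! k = q ! (k+1) + 1"
      using p by simp
  qed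
  have s0: "q ! 0 = Suc h \<or> h = q ! 0 + 1"
  proof -
    have "p ! (0 + 1) = p ! 0 + 1 \<or> p ! 0 = p ! (0 + 1) + 1"
      using Suc.prems unfolding isw_def by blast
    then show ?thesis using p a by simp
  qed
  have iq: "isw (q ! 0) j q" using lq st by (simp add: isw_def)
  from s0 show ?case
  proof
    assume "q ! 0 = Suc h"
    then show ?thesis using Suc.IH[OF iq] p a by auto
  next
    assume "h = q ! 0 + 1"
    then show ?thesis using Suc.IH[OF iq] p a by auto
  qed
qed

lemma distinct_pw: "distinct (pw h j)"
proof (induction j arbitrary: h)
  case 0 then show ?case by simp
next
  case (Suc j)
  have "set (map (Cons h) (pw (Suc h) j)) \<inter> set (map (Cons h) (pw (h - 1) j)) = {}" if "h > 0"
    using that by (auto dest!: pw_props)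
  then show ?case using Suc by (auto simp: distinct_map)
qed

lemma Gf_last: "Gf x k p \<noteq> 0 \<Longrightarrow> p \<noteq> [] \<and> last p = 0"
proof (induction k arbitrary: p)
  case 0 then show ?case by (auto split: if_splits)
next
  case (Suc k)
  then obtain j where j: "j < length p" and g: "Gf x k (drop j p) \<noteq> 0"
    by (auto elim: sum.not_neutral_contains_not_neutral)
  then show ?case using Suc.IH[OF g] by auto
qed

lemma Gf_nonneg: "x \<ge> 0 \<Longrightarrow> Gf x k p \<ge> 0"
  by (induction k arbitrary: p) (auto intro!: sum_nonneg)

lemma abs_wt0: "q \<noteq> [] \<Longrightarrow> \<bar>wt 0 q\<bar> = (\<Prod>i<length q - 1. real (q ! i))"
proof (induction q rule: wtP.induct)
  case 1 then show ?case by simp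
next
  case (2 h) then show ?case by simp
next
  case (3 h h' t)
  have "\<bar>wt 0 (h # h' # t)\<bar> = real h * \<bar>wt 0 (h' # t)\<bar>"
    by (simp add: stepw_def abs_mult)
  also have "\<dots> = real h * (\<Prod>i<length t. real ((h' # t) ! i))"
    using 3 by simp
  also have "\<dots> = (\<Prod>i<length (h # h' # t) - 1. real ((h # h' # t) ! i))"
  proof -
    have l: "length (h # h' # t) - 1 = Suc (length t)" by simp
    show ?thesis by (simp only: l prod.lessThan_Suc_shift nth_Cons_0 nth_Cons_Suc)
  qed
  finally show ?case .
qed

definition Cl :: "nat list \<Rightarrow> real" where
  "Cl p = (\<Prod>k = 1..length p - 2. real (p ! k))"

lemma coeff_wtP1:
  assumes "p \<in> set (pw 0 (Suc j))"
  shows "\<bar>coeff (wtP p) 1\<bar> = Cl p"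
proof -
  obtain q where p: "p = 0 # q" and q: "q \<in> set (pw 1 j)" using assms by auto
  obtain t where qt: "q = 1 # t" using pw_props[OF q] by (cases q) auto
  have "coeff (wtP p) 1 = coeff ([:0, 1:] * wtP q) 1"
    unfolding p qt by (simp add: stepP_def)
  also have "\<dots> = wt 0 q"
    by (simp only: X_mult_coeff1 poly_0_coeff_0[symmetric] poly_wtP)
  finally have "\<bar>coeff (wtP p) 1\<bar> = (\<Prod>i<length q - 1. real (q ! i))"
    using abs_wt0[of q] qt by simp
  also have "\<dots> = Cl p"
    unfolding Cl_def p using qt by (simp add: prod.atLeast1_atMost_eq)
  finally show ?thesis .
qed

lemma abs_sum_list_le: "\<bar>(\<Sum>p\<leftarrow>xs. f p)\<bar> \<le> (\<Sum>p\<leftarrow>xs. \<bar>f p :: real\<bar>)"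
  by (induction xs) (auto intro: order.trans[OF abs_triangle_ineq])

lemma coeff_RP_bound:
  assumes x: "x \<ge> 0" and s: "s \<ge> 1"
  shows "\<bar>coeff (RP x k s) 1\<bar> \<le> (\<Sum>p\<leftarrow>pw 0 s. Gf x k p * Cl p)"
proof -
  obtain j where j: "s = Suc j" using s by (cases s) auto
  have "\<bar>coeff (RP x k s) 1\<bar> = \<bar>\<Sum>p\<leftarrow>pw 0 s. Gf x k p * coeff (wtP p) 1\<bar>"
    by (simp add: RP_def coeff_sum_list_smult)
  also have "\<dots> \<le> (\<Sum>p\<leftarrow>pw 0 s. \<bar>Gf x k p * coeff (wtP p) 1\<bar>)"
    by (rule abs_sum_list_le)
  also have "\<dots> = (\<Sum>p\<leftarrow>pw 0 s. Gf x k p * Cl p)"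
  proof (intro sum_list_map_cong)
    fix p assume "p \<in> set (pw 0 s)"
    then have "p \<in> set (pw 0 (Suc j))" using j by simp
    from coeff_wtP1[OF this] show "\<bar>Gf x k p * coeff (wtP p) 1\<bar> = Gf x k p * Cl p"
      by (simp add: abs_mult Gf_nonneg[OF x])
  qed
  finally show ?thesis .
qed

lemma dyck_isw: "\<delta> \<in> dyck_star s \<Longrightarrow> isw 0 s \<delta>"
  unfolding dyck_star_def isw_def by auto

lemma finite_dyck: "finite (dyck_star s)"
proof -
  have "dyck_star s \<subseteq> set (pw 0 s)" using dyck_isw isw_pw by blast
  then show ?thesis using finite_subset by blast
qed

lemma list_to_dyck:
  assumes s: "s \<ge> 1"
  shows "(\<Sum>p\<leftarrow>pw 0 s. Gf x k p * Cl p) = (\<Sum>\<delta>\<in>dyck_star s. Gf x k \<delta> * Cl \<delta>)"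
proof -
  have sub: "dyck_star s \<subseteq> set (pw 0 s)" using dyck_isw isw_pw by blast
  have z: "Gf x k p * Cl p = 0" if p: "p \<in> set (pw 0 s) - dyck_star s" for p
  proof (rule ccontr)
    assume nz: "Gf x k p * Cl p \<noteq> 0"
    then have g: "Gf x k p \<noteq> 0" and c: "Cl p \<noteq> 0" by auto
    have iw: "isw 0 s p" using p pw_isw by blast
    then have l: "length p = Suc s" by (simp add: isw_def)
    have "last p = 0" using Gf_last[OF g] by simp
    moreover have "p \<noteq> []" using l by auto
    ultimately have e: "p ! s = 0" using l last_conv_nth[of p] by simp
    have m: "1 \<le> p ! k" if "1 \<le> k" "k \<le> s - 1" for k
    proof -
      have "(\<Prod>k = 1..length p - 2. real (p ! k)) \<noteq> 0" using c by (simp add: Cl_def)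
      then have "p ! k \<noteq> 0" using that l by auto
      then show ?thesis by simp
    qed
    have "p \<in> dyck_star s"
      using iw e m unfolding dyck_star_def isw_def by auto
    then show False using p by simp
  qed
  have "(\<Sum>p\<leftarrow>pw 0 s. Gf x k p * Cl p) = (\<Sum>p\<in>set (pw 0 s). Gf x k p * Cl p)"
    by (simp add: sum_list_distinct_conv_sum_set distinct_pw)
  also have "\<dots> = (\<Sum>\<delta>\<in>dyck_star s. Gf x k \<delta> * Cl \<delta>)"
    by (rule sum.mono_neutral_right) (use sub z in auto)
  finally show ?thesis .
qed


lemma comp0: "compositions 0 = {[]}"
proof -
  have "c = []" if "\<forall>x\<in>set c. 0 < x" "sum_list c = (0::nat)" for c
    using that by (cases c) auto
  then show ?thesis unfolding compositions_def by auto
qed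

lemma comp_ne: "m \<ge> 1 \<Longrightarrow> c \<in> compositions m \<Longrightarrow> c \<noteq> []"
  unfolding compositions_def by auto

lemma comp_split:
  assumes "m \<ge> 1"
  shows "compositions m = insert [m] (\<Union>j\<in>{1..<m}. (Cons j) ` compositions (m - j))"
proof
  show "compositions m \<subseteq> insert [m] (\<Union>j\<in>{1..<m}. (Cons j) ` compositions (m - j))"
  proof
    fix c assume c: "c \<in> compositions m"
    then obtain a c' where ac: "c = a # c'" using comp_ne[OF assms] by (cases c) auto
    have pos: "\<forall>i\<in>set c'. 0 < i" "0 < a" and sm: "a + sum_list c' = m"
      using c ac unfolding compositions_def by auto
    show "c \<in> insert [m] (\<Union>j\<in>{1..<m}. (Cons j) ` compositions (m - j))"
    proof (cases "c' = []")
      case True then show ?thesis using ac sm by simp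
    next
      case False
      then obtain b c'' where "c' = b # c''" by (cases c') auto
      then have "sum_list c' > 0" using pos by auto
      then have "a \<in> {1..<m}" "c' \<in> compositions (m - a)"
        using pos sm unfolding compositions_def by auto
      then show ?thesis using ac by blast
    qed
  qed
next
  show "insert [m] (\<Union>j\<in>{1..<m}. (Cons j) ` compositions (m - j)) \<subseteq> compositions m"
    using assms unfolding compositions_def by auto
qed

lemma finite_comp: "finite (compositions m)"
proof (induction m rule: less_induct)
  case (less m)
  show ?case
  proof (cases "m = 0")
    case True then show ?thesis by (simp add: comp0)
  next
    case False
    then have "m \<ge> 1" by simp
    then show ?thesis unfolding comp_split[OF \<open>m \<ge> 1\<close>]
      using less by auto
  qed
qed

lemma desc_single: "descent_set [m] = {}"
  unfolding descent_set_def by auto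

lemma desc_cons:
  assumes "c \<noteq> []"
  shows "descent_set (j # c) = insert j ((+) j ` descent_set c)"
proof
  show "descent_set (j # c) \<subseteq> insert j ((+) j ` descent_set c)"
  proof
    fix d assume "d \<in> descent_set (j # c)"
    then obtain i where i: "d = sum_list (take i (j # c))" "1 \<le> i" "i < length (j # c)"
      unfolding descent_set_def by auto
    show "d \<in> insert j ((+) j ` descent_set c)"
    proof (cases "i = 1")
      case True then show ?thesis using i by simp
    next
      case False
      then obtain i' where i': "i = Suc i'" "1 \<le> i'" using i by (cases i) auto
      then have "sum_list (take i' c) \<in> descent_set c"
        using i unfolding descent_set_def by auto
      then show ?thesis using i i' by auto
    qed
  qed
next
  show "insert j ((+) j ` descent_set c) \<subseteq> descent_set (j # c)"
  proof
    fix d assume "d \<in> insert j ((+) j ` descent_set c)"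
    then show "d \<in> descent_set (j # c)"
    proof
      assume "d = j"
      then have "d = sum_list (take 1 (j # c))" by simp
      moreover have "1 < length (j # c)" using assms by (cases c) auto
      ultimately show ?thesis unfolding descent_set_def by blast
    next
      assume "d \<in> (+) j ` descent_set c"
      then obtain i where i: "d = j + sum_list (take i c)" "1 \<le> i" "i < length c"
        unfolding descent_set_def by auto
      then have "d = sum_list (take (Suc i) (j # c))" "1 \<le> Suc i" "Suc i < length (j # c)" by auto
      then show ?thesis unfolding descent_set_def by blast
    qed
  qed
qed

lemma desc_pos:
  assumes "c \<in> compositions m" "d \<in> descent_set c"
  shows "d \<ge> 1"
proof -
  obtain i where i: "d = sum_list (take i c)" "1 \<le> i" "i < length c"
    using assms(2) unfolding descent_set_def by auto
  obtain a c' where ac: "c = a # c'" using i by (cases c) auto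
  have "a > 0" using assms(1) ac unfolding compositions_def by auto
  obtain i' where "i = Suc i'" using i by (cases i) auto
  then have "d = a + sum_list (take i' c')" using i ac by simp
  then show ?thesis using \<open>a > 0\<close> by simp
qed

lemma finite_desc: "finite (descent_set c)"
proof -
  have "descent_set c \<subseteq> (\<lambda>i. sum_list (take i c)) ` {..<length c}"
    unfolding descent_set_def by auto
  then show ?thesis using finite_subset by blast
qed

definition yv :: "real \<Rightarrow> nat list \<Rightarrow> nat \<Rightarrow> real" where
  "yv x \<delta> u = x ^ (\<delta> ! u) / (1 - x ^ (\<delta> ! u))"

definition Wc :: "real \<Rightarrow> nat \<Rightarrow> nat list \<Rightarrow> nat \<Rightarrow> real" where
  "Wc x s \<delta> t = (\<Sum>c\<in>compositions (s - t). (\<Prod>i<length c. 1 / fact (c ! i)) * (\<Prod>d\<in>descent_set c. yv x \<delta> (t + d)))"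

definition Gt :: "real \<Rightarrow> nat \<Rightarrow> nat list \<Rightarrow> nat \<Rightarrow> real" where
  "Gt x s \<delta> u = (if u = s then 1 else yv x \<delta> u * Wc x s \<delta> u)"

lemma comp_rec:
  assumes "t < s"
  shows "Wc x s \<delta> t = (\<Sum>j\<in>{1..s-t}. Gt x s \<delta> (t + j) / fact j)"
proof -
  define m where "m = s - t"
  have m1: "m \<ge> 1" using assms by (simp add: m_def)
  define F where "F = (\<lambda>c. (\<Prod>i<length c. 1 / fact (c ! i)) * (\<Prod>d\<in>descent_set c. yv x \<delta> (t + d)) :: real)"
  have notin: "[m] \<notin> (\<Union>j\<in>{1..<m}. (Cons j) ` compositions (m - j))"
  proof
    assume "[m] \<in> (\<Union>j\<in>{1..<m}. (Cons j) ` compositions (m - j))"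
    then obtain j where j: "j \<in> {1..<m}" "[] \<in> compositions (m - j)" by auto
    then have "m - j \<ge> 1" by auto
    then show False using comp_ne[of "m - j" "[]"] j by auto
  qed
  have fin: "finite (\<Union>j\<in>{1..<m}. (Cons j) ` compositions (m - j))"
    using finite_comp by auto
  have Fj: "(\<Sum>c\<in>(Cons j) ` compositions (m - j). F c) = yv x \<delta> (t + j) * Wc x s \<delta> (t + j) / fact j"
    if j: "j \<in> {1..<m}" for j
  proof -
    have "(\<Sum>c\<in>(Cons j) ` compositions (m - j). F c) = (\<Sum>c\<in>compositions (m - j). F (j # c))"
      by (subst sum.reindex) (auto simp: inj_on_def)
    also have "\<dots> = (\<Sum>c\<in>compositions (m - j). 1 / fact j * yv x \<delta> (t + j) *
        ((\<Prod>i<length c. 1 / fact (c ! i)) * (\<Prod>d\<in>descent_set c. yv x \<delta> (t + j + d))))"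
    proof (intro sum.cong refl)
      fix c assume c: "c \<in> compositions (m - j)"
      have "m - j \<ge> 1" using j by auto
      then have cne: "c \<noteq> []" using comp_ne[OF _ c] by blast
      have nj: "j \<notin> (+) j ` descent_set c" using desc_pos[OF c, of 0] by auto
      have "(\<Prod>d\<in>descent_set (j # c). yv x \<delta> (t + d)) = yv x \<delta> (t + j) * (\<Prod>d\<in>(+) j ` descent_set c. yv x \<delta> (t + d))"
        unfolding desc_cons[OF cne] using finite_desc nj by (simp add: prod.insert)
      also have "(\<Prod>d\<in>(+) j ` descent_set c. yv x \<delta> (t + d)) = (\<Prod>d\<in>descent_set c. yv x \<delta> (t + j + d))"
        by (subst prod.reindex) (auto simp: inj_on_def add.assoc)
      finally have p1: "(\<Prod>d\<in>descent_set (j # c). yv x \<delta> (t + d)) = yv x \<delta> (t + j) * (\<Prod>d\<in>descent_set c. yv x \<delta> (t + j + d))" .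
      have p2: "(\<Prod>i<length (j # c). 1 / fact ((j # c) ! i)) = 1 / fact j * (\<Prod>i<length c. 1 / fact (c ! i))"
      proof -
        have l: "length (j # c) = Suc (length c)" by simp
        show ?thesis by (simp only: l prod.lessThan_Suc_shift nth_Cons_0 nth_Cons_Suc)
      qed
      show "F (j # c) = 1 / fact j * yv x \<delta> (t + j) *
        ((\<Prod>i<length c. 1 / fact (c ! i)) * (\<Prod>d\<in>descent_set c. yv x \<delta> (t + j + d)))"
        unfolding F_def p1 p2 by (simp add: mult_ac)
    qed
    also have "\<dots> = yv x \<delta> (t + j) * Wc x s \<delta> (t + j) / fact j"
    proof -
      have "s - (t + j) = m - j" by (simp add: m_def)
      then show ?thesis unfolding Wc_def by (simp add: sum_distrib_left sum_divide_distrib mult_ac)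
    qed
    finally show ?thesis .
  qed
  have "Wc x s \<delta> t = (\<Sum>c\<in>compositions m. F c)"
    unfolding Wc_def F_def m_def ..
  also have "\<dots> = F [m] + (\<Sum>c\<in>(\<Union>j\<in>{1..<m}. (Cons j) ` compositions (m - j)). F c)"
    unfolding comp_split[OF m1] using fin notin by (simp add: sum.insert)
  also have "(\<Sum>c\<in>(\<Union>j\<in>{1..<m}. (Cons j) ` compositions (m - j)). F c)
      = (\<Sum>j\<in>{1..<m}. \<Sum>c\<in>(Cons j) ` compositions (m - j). F c)"
    by (rule sum.UNION_disjoint) (auto simp: finite_comp)
  also have "\<dots> = (\<Sum>j\<in>{1..<m}. yv x \<delta> (t + j) * Wc x s \<delta> (t + j) / fact j)"
    by (intro sum.cong refl Fj) 
  also have "F [m] = 1 / fact m"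
    unfolding F_def by (simp add: desc_single)
  finally have "Wc x s \<delta> t = 1 / fact m + (\<Sum>j\<in>{1..<m}. yv x \<delta> (t + j) * Wc x s \<delta> (t + j) / fact j)" .
  also have "\<dots> = (\<Sum>j\<in>{1..m}. Gt x s \<delta> (t + j) / fact j)"
  proof -
    have e: "{1..m} = insert m {1..<m}" using m1 by auto
    have "(\<Sum>j\<in>{1..<m}. Gt x s \<delta> (t + j) / fact j) = (\<Sum>j\<in>{1..<m}. yv x \<delta> (t + j) * Wc x s \<delta> (t + j) / fact j)"
      by (intro sum.cong refl) (auto simp: Gt_def m_def)
    moreover have "Gt x s \<delta> (t + m) = 1" using assms by (simp add: Gt_def m_def)
    ultimately show ?thesis unfolding e by (simp add: sum.insert)
  qed
  finally show ?thesis unfolding m_def .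
qed


locale dyckctx =
  fixes x :: real and s :: nat and \<delta> :: "nat list"
  assumes x0: "0 < x" and x1: "x < 1" and s1: "s \<ge> 1" and dy: "\<delta> \<in> dyck_star s"
begin

lemma len: "length \<delta> = Suc s" using dy by (simp add: dyck_star_def)
lemma last0: "\<delta> ! s = 0" using dy by (simp add: dyck_star_def)
lemma first0: "\<delta> ! 0 = 0" using dy by (simp add: dyck_star_def)
lemma mid: "0 < u \<Longrightarrow> u < s \<Longrightarrow> \<delta> ! u \<ge> 1" using dy by (simp add: dyck_star_def)

lemma phi_lt: "0 < u \<Longrightarrow> u < s \<Longrightarrow> x ^ (\<delta> ! u) < 1"
proof -
  assume "0 < u" "u < s"
  then have "\<delta> ! u \<ge> 1" by (rule mid)
  then show ?thesis using x0 x1 by (simp add: power_less_one_iff)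
qed

lemma phi_le: "x ^ k \<le> 1" using x0 x1 by (simp add: power_le_one)

lemma yv_nonneg: "yv x \<delta> u \<ge> 0"
  unfolding yv_def using phi_le[of "\<delta> ! u"] x0 by simp

lemma Wc_nonneg: "Wc x s \<delta> t \<ge> 0"
  unfolding Wc_def using yv_nonneg by (intro sum_nonneg mult_nonneg_nonneg prod_nonneg) auto

lemma Gt_nonneg: "Gt x s \<delta> u \<ge> 0"
  unfolding Gt_def using yv_nonneg Wc_nonneg by simp

definition Gm :: "nat \<Rightarrow> real" where
  "Gm u = (if u = s then 1 else Wc x s \<delta> u / (1 - x ^ (\<delta> ! u)))"

lemma Gm_nonneg: "Gm u \<ge> 0"
  unfolding Gm_def using Wc_nonneg phi_le[of "\<delta> ! u"] by simp

lemma drop_eq0: "u \<le> s \<Longrightarrow> (drop u \<delta> = [0]) \<longleftrightarrow> u = s"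
proof
  assume u: "u \<le> s" and "drop u \<delta> = [0]"
  then have "length (drop u \<delta>) = 1" by simp
  then show "u = s" using len u by simp
next
  assume "u = s"
  then show "drop u \<delta> = [0]" using len last0
    by (metis Cons_nth_drop_Suc append_Nil2 append_take_drop_id drop_all lessI order_refl same_append_eq)
qed

lemma Gf_unfold:
  assumes "t \<le> s"
  shows "Gf x (Suc k) (drop t \<delta>)
    = (if k = 0 then 1 else x ^ (\<delta> ! t)) * Gf x k (drop t \<delta>)
      + (\<Sum>j<s - t. (if k = 0 then 1 else x ^ (\<delta> ! (t + Suc j))) * Gf x k (drop (t + Suc j) \<delta>) / fact (Suc j))"
proof -
  have l: "length (drop t \<delta>) = Suc (s - t)" using len assms by simp
  have "Gf x (Suc k) (drop t \<delta>) = (\<Sum>j<Suc (s - t). (if k = 0 then 1 else x ^ (drop t \<delta> ! j)) * Gf x k (drop j (drop t \<delta>)) / fact j)"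
    by (subst Gf.simps) (simp only: l)
  also have "\<dots> = (\<Sum>j<Suc (s - t). (if k = 0 then 1 else x ^ (\<delta> ! (t + j))) * Gf x k (drop (t + j) \<delta>) / fact j)"
    using len assms by (intro sum.cong refl) (simp add: nth_drop add.commute)
  also have "\<dots> = (if k = 0 then 1 else x ^ (\<delta> ! t)) * Gf x k (drop t \<delta>)
      + (\<Sum>j<s - t. (if k = 0 then 1 else x ^ (\<delta> ! (t + Suc j))) * Gf x k (drop (t + Suc j) \<delta>) / fact (Suc j))"
    by (subst sum.lessThan_Suc_shift) simp
  finally show ?thesis .
qed

lemma term_bound:
  assumes H: "\<And>u. 0 < u \<Longrightarrow> u \<le> s \<Longrightarrow> Gf x k (drop u \<delta>) \<le> Gm u"
    and u: "0 < u" "u \<le> s"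
  shows "(if k = 0 then 1 else x ^ (\<delta> ! u)) * Gf x k (drop u \<delta>) \<le> Gt x s \<delta> u"
proof (cases "k = 0")
  case True
  then show ?thesis using drop_eq0[OF u(2)] Gt_nonneg[of u] by (auto simp: Gt_def)
next
  case False
  have "x ^ (\<delta> ! u) * Gf x k (drop u \<delta>) \<le> x ^ (\<delta> ! u) * Gm u"
    using H[OF u] x0 by (intro mult_left_mono) auto
  also have "\<dots> = Gt x s \<delta> u"
  proof (cases "u = s")
    case True then show ?thesis by (simp add: Gm_def Gt_def last0)
  next
    case False
    then show ?thesis by (simp add: Gm_def Gt_def yv_def)
  qed
  finally show ?thesis using False by simp
qed

lemma rest_bound:
  assumes H: "\<And>u. 0 < u \<Longrightarrow> u \<le> s \<Longrightarrow> Gf x k (drop u \<delta>) \<le> Gm u"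
    and t: "t < s"
  shows "(\<Sum>j<s - t. (if k = 0 then 1 else x ^ (\<delta> ! (t + Suc j))) * Gf x k (drop (t + Suc j) \<delta>) / fact (Suc j))
     \<le> Wc x s \<delta> t"
proof -
  have "(\<Sum>j<s - t. (if k = 0 then 1 else x ^ (\<delta> ! (t + Suc j))) * Gf x k (drop (t + Suc j) \<delta>) / fact (Suc j))
     \<le> (\<Sum>j<s - t. Gt x s \<delta> (t + Suc j) / fact (Suc j))"
    using t by (intro sum_mono divide_right_mono term_bound[OF H]) auto
  also have "\<dots> = (\<Sum>j\<in>{1..s - t}. Gt x s \<delta> (t + j) / fact j)"
    by (simp add: sum.atLeast1_atMost_eq)
  also have "\<dots> = Wc x s \<delta> t" using comp_rec[OF t] by simp
  finally show ?thesis .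
qed

lemma claim1: "0 < t \<Longrightarrow> t \<le> s \<Longrightarrow> Gf x k (drop t \<delta>) \<le> Gm t"
proof (induction k arbitrary: t)
  case 0
  then show ?case using drop_eq0[of t] Gm_nonneg[of t] by (auto simp: Gm_def)
next
  case (Suc k)
  show ?case
  proof (cases "t = s")
    case True
    then have "drop t \<delta> = [0]" using drop_eq0 by simp
    then show ?thesis using True by (simp add: Gf_single Gm_def)
  next
    case False
    then have ts: "t < s" using Suc.prems by simp
    have pl: "x ^ (\<delta> ! t) < 1" using phi_lt Suc.prems ts by simp
    have a: "(if k = 0 then 1 else x ^ (\<delta> ! t)) * Gf x k (drop t \<delta>) \<le> x ^ (\<delta> ! t) * Gm t"
    proof (cases "k = 0")
      case True
      then show ?thesis using drop_eq0[of t] ts Gm_nonneg[of t] x0 by simp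
    next
      case False
      then show ?thesis using Suc.IH[OF Suc.prems] x0 by (simp add: mult_left_mono)
    qed
    have "Gf x (Suc k) (drop t \<delta>) \<le> x ^ (\<delta> ! t) * Gm t + Wc x s \<delta> t"
      unfolding Gf_unfold[OF Suc.prems(2)] using a rest_bound[OF Suc.IH ts] by linarith
    also have "\<dots> = Gm t"
      using pl ts by (simp add: Gm_def field_simps)
    finally show ?thesis .
  qed
qed

lemma claim2: "Gf x k \<delta> \<le> real k * Wc x s \<delta> 0"
proof (induction k)
  case 0
  have "\<delta> \<noteq> [0]" using len s1 by auto
  then show ?case by simp
next
  case (Suc k)
  have r: "(\<Sum>j<s - 0. (if k = 0 then 1 else x ^ (\<delta> ! (0 + Suc j))) * Gf x k (drop (0 + Suc j) \<delta>) / fact (Suc j))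
     \<le> Wc x s \<delta> 0"
    by (rule rest_bound[OF claim1]) (use s1 in auto)
  have u: "Gf x (Suc k) (drop 0 \<delta>) = (if k = 0 then 1 else x ^ (\<delta> ! 0)) * Gf x k (drop 0 \<delta>)
      + (\<Sum>j<s - 0. (if k = 0 then 1 else x ^ (\<delta> ! (0 + Suc j))) * Gf x k (drop (0 + Suc j) \<delta>) / fact (Suc j))"
    by (rule Gf_unfold[OF le0])
  have "(if k = 0 then 1 else x ^ (\<delta> ! 0)) * Gf x k (drop 0 \<delta>) = Gf x k \<delta>"
    by (simp add: first0)
  then have "Gf x (Suc k) (drop 0 \<delta>) \<le> Gf x k \<delta> + Wc x s \<delta> 0"
    using u r by linarith
  then show ?case using Suc.IH by (simp add: algebra_simps)
qed

end


lemma Wc_coef: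
  assumes "\<delta> \<in> dyck_star (2 * r)"
  shows "fact (2 * r) * Wc x (2 * r) \<delta> 0 = (\<Sum>c\<in>compositions (2 * r). coefA r c * coefB x c \<delta>)"
proof -
  have "fact (2 * r) * Wc x (2 * r) \<delta> 0
     = (\<Sum>c\<in>compositions (2 * r). fact (2 * r) * ((\<Prod>i<length c. 1 / fact (c ! i)) * (\<Prod>d\<in>descent_set c. yv x \<delta> d)))"
    unfolding Wc_def by (simp add: sum_distrib_left)
  also have "\<dots> = (\<Sum>c\<in>compositions (2 * r). coefA r c * coefB x c \<delta>)"
  proof (intro sum.cong refl)
    fix c
    have "(\<Prod>i<length c. 1 / fact (c ! i) :: real) = 1 / (\<Prod>i<length c. fact (c ! i))"
      by (simp add: prod_dividef)
    then show "fact (2 * r) * ((\<Prod>i<length c. 1 / fact (c ! i)) * (\<Prod>d\<in>descent_set c. yv x \<delta> d))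
        = coefA r c * coefB x c \<delta>"
      unfolding coefA_def coefB_def yv_def by simp
  qed
  finally show ?thesis .
qed

lemma Cl_coefC: "\<delta> \<in> dyck_star (2 * r) \<Longrightarrow> Cl \<delta> = coefC r \<delta>"
  unfolding Cl_def coefC_def dyck_star_def by simp

theorem theorem5p2:
  fixes \<beta> :: real and r n :: nat
  assumes "\<beta> > 0" and "r \<ge> 1" and "n \<ge> 1"
  shows "\<bar>cumulant_M n \<beta> (2*r)\<bar> / real n \<le>
    (\<Sum>c\<in>compositions (2*r). \<Sum>\<delta>\<in>dyck_star (2*r).
        coefA r c * coefB (tanh \<beta>) c \<delta> * coefC r \<delta>)"
proof -
  define s where "s = 2 * r"
  define x where "x = tanh \<beta>"
  have s1: "s \<ge> 1" using assms(2) by (simp add: s_def)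
  have x0: "0 < x" using assms(1) by (simp add: x_def tanh_real_pos_iff)
  have x1: "x < 1" by (simp add: x_def tanh_real_lt_1)
  have "\<bar>cumulant_M n \<beta> s\<bar> = fact s * \<bar>coeff (RP x n s) 1\<bar>"
    using kappa_formula[OF assms(3) s1, of \<beta>] by (simp add: x_def abs_mult)
  also have "\<dots> \<le> fact s * (\<Sum>p\<leftarrow>pw 0 s. Gf x n p * Cl p)"
    using coeff_RP_bound[OF _ s1, of x n] x0 by (intro mult_left_mono) auto
  also have "(\<Sum>p\<leftarrow>pw 0 s. Gf x n p * Cl p) = (\<Sum>\<delta>\<in>dyck_star s. Gf x n \<delta> * Cl \<delta>)"
    by (rule list_to_dyck[OF s1])
  also have "\<dots> \<le> (\<Sum>\<delta>\<in>dyck_star s. real n * Wc x s \<delta> 0 * Cl \<delta>)"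
  proof (intro sum_mono mult_right_mono)
    fix \<delta> assume d: "\<delta> \<in> dyck_star s"
    interpret dyckctx x s \<delta> using x0 x1 s1 d by unfold_locales
    show "Gf x n \<delta> \<le> real n * Wc x s \<delta> 0" by (rule claim2)
    show "0 \<le> Cl \<delta>" unfolding Cl_def by (intro prod_nonneg) auto
  qed
  finally have "\<bar>cumulant_M n \<beta> s\<bar> \<le> fact s * (\<Sum>\<delta>\<in>dyck_star s. real n * Wc x s \<delta> 0 * Cl \<delta>)"
    by simp
  then have "\<bar>cumulant_M n \<beta> s\<bar> / real n \<le> (\<Sum>\<delta>\<in>dyck_star s. fact s * Wc x s \<delta> 0 * Cl \<delta>)"
    using assms(3) by (simp add: divide_le_eq sum_distrib_left sum_distrib_right mult_ac)
  also have "\<dots> = (\<Sum>\<delta>\<in>dyck_star s. \<Sum>c\<in>compositions s. coefA r c * coefB x c \<delta> * coefC r \<delta>)"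
  proof (intro sum.cong refl)
    fix \<delta> assume d: "\<delta> \<in> dyck_star s"
    show "fact s * Wc x s \<delta> 0 * Cl \<delta> = (\<Sum>c\<in>compositions s. coefA r c * coefB x c \<delta> * coefC r \<delta>)"
      using Wc_coef[of \<delta> r x] Cl_coefC[of \<delta> r] d unfolding s_def
      by (simp add: sum_distrib_right)
  qed
  also have "\<dots> = (\<Sum>c\<in>compositions s. \<Sum>\<delta>\<in>dyck_star s. coefA r c * coefB x c \<delta> * coefC r \<delta>)"
    by (rule sum.swap)
  finally show ?thesis unfolding s_def x_def .
qed


end
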